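(* Let $G=\mathbb{Z}/p^r\mathbb{Z}$. The maximal length $n$ of a chain $P_0\subsetneq P_1\subsetneq\cdots\subsetneq P_n$ of prime ideals of $\Omega_G$ equals $r+1$; such a maximal chain is, for any prime $q\ne p$, $$0\subsetneq\mathcal{S}^r(q)\subsetneq\mathcal{L}\mathcal{S}^{r-1}(q)\subsetneq\cdots\subsetneq\mathcal{L}^r(q).$$ That is, $\dim\Omega_G=r+1$.
   Context: Fix a prime $p$ and an integer $r\ge0$. For $0\le k\le r$ let $R_k$ be the commutative ring which is free as a $\mathbb{Z}$-module with basis $X_{k,0},\dots,X_{k,k}$ and multiplication $X_{k,i}X_{k,j}=p^{k-\max(i,j)}X_{k,\min(i,j)}$; thus $X_{k,k}=1$, and an integer $n$ is identified with $nX_{k,k}$. For $0\le k\le\ell\le r$ define: the additive map $\mathrm{ind}^\ell_k:R_k\to R_\ell$, $X_{k,i}\mapsto X_{\ell,i}$; the ring homomorphism $\mathrm{res}^\ell_k:R_\ell\to R_k$, $\mathrm{res}^\ell_k(X_{\ell,i})=p^{\ell-k}X_{k,i}$ if $i\le k$ and $=p^{\ell-i}$ if $i\ge k$; and the multiplicative map $\mathrm{jnd}^\ell_k:R_k\to R_\ell$, $$\mathrm{jnd}^\ell_k\Big(\sum_{i=0}^k m_iX_{k,i}\Big)=m_kX_{\ell,\ell}+\sum_{k\le i<\ell}\frac{m_k^{p^{\ell-i}}-m_k^{p^{\ell-i-1}}}{p^{\ell-i}}X_{\ell,i}+\sum_{0\le i<k}\frac{(\sum_{s=i}^k m_sp^{k-s})^{p^{\ell-k}}-(\sum_{s=i+1}^k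 m_sp^{k-s})^{p^{\ell-k}}}{p^{\ell-i}}X_{\ell,i}$$ ($m_i\in\mathbb{Z}$). For $k=\ell$ these maps are the identity. These data are the Burnside Tambara functor $\Omega_G$ on $G=\mathbb{Z}/p^r\mathbb{Z}$; keeping only indices $\le n$ gives $\Omega_{H_n}$. An ideal of $\Omega_{H_n}$ is a sequence $[I_0,\dots,I_n]$ of ideals $I_k\subseteq R_k$ such that for every $1\le k\le n$: $\mathrm{ind}^k_{k-1}(I_{k-1})\subseteq I_k$, $\mathrm{res}^k_{k-1}(I_k)\subseteq I_{k-1}$, $\mathrm{jnd}^k_{k-1}(I_{k-1})\subseteq I_k$; inclusion is componentwise. It is proper if $I_0\ne R_0$. A proper ideal is prime if for all $0\le\ell\le k\le n$, $a\in R_k$, $b\in R_\ell$: whenever $(\mathrm{jnd}^m_i\mathrm{res}^k_i(a))\cdot(\mathrm{jnd}^m_j\mathrm{res}^\ell_j(b))\in I_m$ for all $0\le i\le k$, $0\le j\le\ell$, $m=\max(i,j)$, then $a\in I_k$ or $b\in I_\ell$. Operators: for an ideal $I\subseteq R_{k-1}$, $L(I)=(\mathrm{res}^k_{k-1})^{-1}(I)\subseteq R_k$ and $S(I)$ is the ideal of $R_k$ generated by $\mathrm{ind}^k_{k-1}(I)\cup\mathrm{jnd}^k_{k-1}(I)$; for an ideal $\mathscr I=[I_0,\dots,I_{k-1}]$ of $\Omega_{H_{k-1}}$, $\mathcal{L}\mathscr I=[I_0,\dots,I_{k-1},L(I_{k-1})]$, $\mathcal{S}\mathscr I=[I_0,\dots,I_{k-1},S(I_{k-1})]$;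 iterates are $\mathcal L^n,\mathcal S^n$; $(q)$ denotes the ideal $[q\mathbb{Z}]$ of $\Omega_{H_0}$. *)

theory Defs
  imports Main "HOL-Computational_Algebra.Primes" "HOL-Library.Extended_Nat"
begin

text \<open>Elements of R_k are coefficient functions m (coefficient of X_{k,i} is m i),
  zero outside 0..k.\<close>

definition elt :: "nat \<Rightarrow> (nat \<Rightarrow> int) set" where
  "elt k = {a. \<forall>i>k. a i = 0}"

definition zero_elt :: "nat \<Rightarrow> int" where
  "zero_elt = (\<lambda>_. 0)"

text \<open>Multiplication in R_k: X_{k,i} X_{k,j} = p^(k - max i j) X_{k, min i j}.\<close>
definition rmult :: "nat \<Rightarrow> nat \<Rightarrow> (nat \<Rightarrow> int) \<Rightarrow> (nat \<Rightarrow> int) \<Rightarrow> (nat \<Rightarrow> int)" where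
  "rmult p k a b = (\<lambda>i. if i \<le> k then
      (\<Sum>j\<le>k. \<Sum>l\<le>k. if min j l = i then a j * b l * int p ^ (k - max j l) else 0)
    else 0)"

definition rideal :: "nat \<Rightarrow> nat \<Rightarrow> (nat \<Rightarrow> int) set \<Rightarrow> bool" where
  "rideal p k I \<longleftrightarrow> I \<subseteq> elt k \<and> zero_elt \<in> I
     \<and> (\<forall>a\<in>I. \<forall>b\<in>I. (\<lambda>i. a i + b i) \<in> I)
     \<and> (\<forall>a\<in>I. (\<lambda>i. - a i) \<in> I)
     \<and> (\<forall>a\<in>I. \<forall>b\<in>elt k. rmult p k b a \<in> I)"

text \<open>ind^l_k : R_k \<rightarrow> R_l, X_{k,i} \<mapsto> X_{l,i} (coefficients unchanged).\<close>
definition tind :: "nat \<Rightarrow> nat \<Rightarrow> (nat \<Rightarrow> int) \<Rightarrow> (nat \<Rightarrow> int)" where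
  "tind l k a = a"

definition tres :: "nat \<Rightarrow> nat \<Rightarrow> nat \<Rightarrow> (nat \<Rightarrow> int) \<Rightarrow> (nat \<Rightarrow> int)" where
  "tres p l k a = (\<lambda>j. if j < k then int p ^ (l - k) * a j
      else if j = k then (\<Sum>i\<in>{k..l}. int p ^ (l - i) * a i) else 0)"

text \<open>jnd^l_k : R_k \<rightarrow> R_l (the divisions are exact).\<close>
definition tjnd :: "nat \<Rightarrow> nat \<Rightarrow> nat \<Rightarrow> (nat \<Rightarrow> int) \<Rightarrow> (nat \<Rightarrow> int)" where
  "tjnd p l k m = (\<lambda>i.
     if i = l then m k
     else if k \<le> i \<and> i < l then
       (m k ^ (p ^ (l - i)) - m k ^ (p ^ (l - i - 1))) div (int p ^ (l - i))
     else if i < k then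
       ((\<Sum>s\<in>{i..k}. m s * int p ^ (k - s)) ^ (p ^ (l - k))
        - (\<Sum>s\<in>{i+1..k}. m s * int p ^ (k - s)) ^ (p ^ (l - k))) div (int p ^ (l - i))
     else 0)"

text \<open>Ideal of the Tambara functor Omega_{H_n}: list [I_0, ..., I_n].\<close>
definition tideal :: "nat \<Rightarrow> nat \<Rightarrow> (nat \<Rightarrow> int) set list \<Rightarrow> bool" where
  "tideal p n I \<longleftrightarrow> length I = Suc n \<and> (\<forall>k\<le>n. rideal p k (I ! k))
     \<and> (\<forall>k\<in>{1..n}. tind k (k - 1) ` (I ! (k - 1)) \<subseteq> I ! k
                   \<and> tres p k (k - 1) ` (I ! k) \<subseteq> I ! (k - 1)
                   \<and> tjnd p k (k - 1) ` (I ! (k - 1)) \<subseteq> I ! k)"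

definition tprime :: "nat \<Rightarrow> nat \<Rightarrow> (nat \<Rightarrow> int) set list \<Rightarrow> bool" where
  "tprime p n I \<longleftrightarrow> tideal p n I \<and> I ! 0 \<noteq> elt 0 \<and>
     (\<forall>k\<le>n. \<forall>l\<le>k. \<forall>a\<in>elt k. \<forall>b\<in>elt l.
        (\<forall>i\<le>k. \<forall>j\<le>l. rmult p (max i j) (tjnd p (max i j) i (tres p k i a))
                                         (tjnd p (max i j) j (tres p l j b)) \<in> I ! (max i j))
        \<longrightarrow> a \<in> I ! k \<or> b \<in> I ! l)"

definition tsubset :: "(nat \<Rightarrow> int) set list \<Rightarrow> (nat \<Rightarrow> int) set list \<Rightarrow> bool" where
  "tsubset I J \<longleftrightarrow> length I = length J \<and> (\<forall>k<length I. I ! k \<subseteq> J ! k)"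

definition tpsubset :: "(nat \<Rightarrow> int) set list \<Rightarrow> (nat \<Rightarrow> int) set list \<Rightarrow> bool" where
  "tpsubset I J \<longleftrightarrow> tsubset I J \<and> I \<noteq> J"

definition prime_chain :: "nat \<Rightarrow> nat \<Rightarrow> (nat \<Rightarrow> (nat \<Rightarrow> int) set list) \<Rightarrow> nat \<Rightarrow> bool" where
  "prime_chain p n C len \<longleftrightarrow> (\<forall>i\<le>len. tprime p n (C i)) \<and> (\<forall>i<len. tpsubset (C i) (C (Suc i)))"

definition tdim :: "nat \<Rightarrow> nat \<Rightarrow> enat" where
  "tdim p n = Sup {enat len | len. \<exists>C. prime_chain p n C len}"

definition Lset :: "nat \<Rightarrow> nat \<Rightarrow> (nat \<Rightarrow> int) set \<Rightarrow> (nat \<Rightarrow> int) set" where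
  "Lset p k I = {a \<in> elt k. tres p k (k - 1) a \<in> I}"

definition Sset :: "nat \<Rightarrow> nat \<Rightarrow> (nat \<Rightarrow> int) set \<Rightarrow> (nat \<Rightarrow> int) set" where
  "Sset p k I = \<Inter>{J. rideal p k J \<and> tind k (k - 1) ` I \<union> tjnd p k (k - 1) ` I \<subseteq> J}"

definition Lop :: "nat \<Rightarrow> (nat \<Rightarrow> int) set list \<Rightarrow> (nat \<Rightarrow> int) set list" where
  "Lop p I = I @ [Lset p (length I) (last I)]"

definition Sop :: "nat \<Rightarrow> (nat \<Rightarrow> int) set list \<Rightarrow> (nat \<Rightarrow> int) set list" where
  "Sop p I = I @ [Sset p (length I) (last I)]"

definition qid :: "nat \<Rightarrow> (nat \<Rightarrow> int) set list" where
  "qid q = [{a \<in> elt 0. int q dvd a 0}]"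

definition zero_tideal :: "nat \<Rightarrow> (nat \<Rightarrow> int) set list" where
  "zero_tideal n = replicate (Suc n) {zero_elt}"

definition std_chain :: "nat \<Rightarrow> nat \<Rightarrow> nat \<Rightarrow> nat \<Rightarrow> (nat \<Rightarrow> int) set list" where
  "std_chain p r q j = (if j = 0 then zero_tideal r
     else (Lop p ^^ (j - 1)) ((Sop p ^^ (r + 1 - j)) (qid q)))"

end

theory Submission
  imports Defs "HOL-Number_Theory.Number_Theory"
begin


definition phi :: "nat \<Rightarrow> nat \<Rightarrow> nat \<Rightarrow> (nat \<Rightarrow> int) \<Rightarrow> int" where
  "phi p k t a = (\<Sum>s\<in>{t..k}. int p ^ (k - s) * a s)"

lemma phi_top: "phi p k k a = a k"
  by (simp add: phi_def)

lemma phi_step: "t \<le> k \<Longrightarrow> phi p k t a = int p ^ (k - t) * a t + phi p k (Suc t) a"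
  unfolding phi_def by (simp add: sum.atLeast_Suc_atMost)

lemma phi_above: "k < t \<Longrightarrow> phi p k t a = 0"
  by (simp add: phi_def)

lemma gh_eq:
  assumes p: "p > 0" and a: "a \<in> elt k" and b: "b \<in> elt k"
    and h: "\<And>t. t \<le> k \<Longrightarrow> phi p k t a = phi p k t b"
  shows "a = b"
proof
  fix s show "a s = b s"
  proof (cases "s \<le> k")
    case True
    have h1: "phi p k (Suc s) a = phi p k (Suc s) b"
      using h phi_above[of k "Suc s"] by (cases "Suc s \<le> k") auto
    have "int p ^ (k - s) * a s = int p ^ (k - s) * b s"
      using phi_step[OF True, of p a] phi_step[OF True, of p b] h[OF True] h1 by linarith
    moreover have "int p ^ (k - s) \<noteq> 0" using p by simp
    ultimately show ?thesis using p by auto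
  next
    case False then show ?thesis using a b by (simp add: elt_def)
  qed
qed

lemma phi_add: "phi p k t (\<lambda>j. a j + b j) = phi p k t a + phi p k t b"
  by (simp add: phi_def sum.distrib algebra_simps)
lemma phi_neg: "phi p k t (\<lambda>j. - a j) = - phi p k t a"
  by (simp add: phi_def sum_negf)
lemma phi_diff: "phi p k t (\<lambda>j. a j - b j) = phi p k t a - phi p k t b"
  by (simp add: phi_def sum_subtractf algebra_simps)
lemma phi_smult: "phi p k t (\<lambda>j. c * a j) = c * phi p k t a"
  by (simp add: phi_def sum_distrib_left algebra_simps)
lemma phi_zero: "phi p k t zero_elt = 0"
  by (simp add: phi_def zero_elt_def)

lemma phi_rmult: "phi p k t (rmult p k x y) = phi p k t x * phi p k t y"
proof -
  let ?P = "int p"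
  have "phi p k t (rmult p k x y) =
     (\<Sum>s\<in>{t..k}. \<Sum>j\<le>k. \<Sum>l\<le>k. if min j l = s then ?P ^ (k - s) * (x j * y l * ?P ^ (k - max j l)) else 0)"
    unfolding phi_def rmult_def
    by (rule sum.cong) (auto simp: sum_distrib_left intro!: sum.cong)
  also have "\<dots> = (\<Sum>j\<le>k. \<Sum>l\<le>k. \<Sum>s\<in>{t..k}. if min j l = s then ?P ^ (k - s) * (x j * y l * ?P ^ (k - max j l)) else 0)"
    by (subst sum.swap) (simp add: sum.swap[of _ "{t..k}"])
  also have "\<dots> = (\<Sum>j\<le>k. \<Sum>l\<le>k. if t \<le> min j l then ?P ^ (k - min j l) * (x j * y l * ?P ^ (k - max j l)) else 0)"
    by (intro sum.cong refl) (auto simp: sum.delta')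
  also have "\<dots> = (\<Sum>j\<le>k. \<Sum>l\<le>k. (if t \<le> j then ?P ^ (k - j) * x j else 0) * (if t \<le> l then ?P ^ (k - l) * y l else 0))"
    by (intro sum.cong refl) (auto simp: min_def max_def)
  also have "\<dots> = (\<Sum>j\<le>k. if t \<le> j then ?P ^ (k - j) * x j else 0) * (\<Sum>l\<le>k. if t \<le> l then ?P ^ (k - l) * y l else 0)"
    by (simp add: sum_product)
  also have "\<dots> = phi p k t x * phi p k t y"
  proof -
    have "\<And>f. (\<Sum>j\<le>k. if t \<le> j then f j else 0) = (\<Sum>j\<in>{t..k}. f j :: int)"
      by (subst sum.inter_filter[symmetric]) (auto intro!: sum.cong)
    then show ?thesis by (simp add: phi_def)
  qed
  finally show ?thesis .
qed




lemma phi_tres: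
  assumes "u \<le> k" "k \<le> l"
  shows "phi p k u (tres p l k a) = phi p l u a"
proof -
  have s1: "{u..k} = {u..<k} \<union> {k}" using assms by auto
  have s2: "{u..l} = {u..<k} \<union> {k..l}" using assms by auto
  have "phi p k u (tres p l k a) = (\<Sum>s\<in>{u..<k}. int p ^ (k - s) * (int p ^ (l - k) * a s))
        + (\<Sum>i\<in>{k..l}. int p ^ (l - i) * a i)"
    unfolding phi_def tres_def s1 by (subst sum.union_disjoint) auto
  also have "(\<Sum>s\<in>{u..<k}. int p ^ (k - s) * (int p ^ (l - k) * a s)) = (\<Sum>s\<in>{u..<k}. int p ^ (l - s) * a s)"
  proof (rule sum.cong)
    fix s assume "s \<in> {u..<k}"
    then have "l - s = (k - s) + (l - k)" using assms by auto
    then show "int p ^ (k - s) * (int p ^ (l - k) * a s) = int p ^ (l - s) * a s"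
      by (simp add: power_add)
  qed simp
  also have "\<dots> + (\<Sum>i\<in>{k..l}. int p ^ (l - i) * a i) = phi p l u a"
    unfolding phi_def s2 by (subst sum.union_disjoint) auto
  finally show ?thesis .
qed

lemma tres_elt: "tres p l k a \<in> elt k"
  by (simp add: elt_def tres_def)
lemma rmult_elt: "rmult p k a b \<in> elt k"
  by (simp add: elt_def rmult_def)
lemma tjnd_elt: "k \<le> l \<Longrightarrow> tjnd p l k a \<in> elt l"
  by (simp add: elt_def tjnd_def)

lemma cong_pow_p:
  fixes x y :: int
  assumes p: "prime p" and e: "e \<ge> 1" and d: "int p ^ e dvd x - y"
  shows "int p ^ (e + 1) dvd x ^ p - y ^ p"
proof -
  have xy: "[x = y] (mod int p)"
  proof -
    have "int p dvd int p ^ e" using e by (simp add: dvd_power)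
    then have "int p dvd x - y" using d by (rule dvd_trans)
    then show ?thesis by (simp add: cong_iff_dvd_diff)
  qed
  have "[(\<Sum>i<p. y^(p - Suc i) * x^i) = (\<Sum>i<p. y^(p - Suc i) * y^i)] (mod int p)"
    by (intro cong_sum cong_mult cong_refl cong_pow xy)
  also have "(\<Sum>i<p. y^(p - Suc i) * y^i) = (\<Sum>i<p. y^(p - 1))"
    by (intro sum.cong refl) (auto simp: power_add[symmetric])
  also have "\<dots> = int p * y^(p-1)" by simp
  finally have "int p dvd (\<Sum>i<p. y^(p - Suc i) * x^i)"
    using cong_dvd_iff by (metis cong_sym dvd_triv_left)
  then have "int p ^ e * int p dvd (x - y) * (\<Sum>i<p. y^(p - Suc i) * x^i)"
    using d by (intro mult_dvd_mono) auto
  then show ?thesis by (simp add: power_diff_sumr2 power_add mult.commute)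
qed




lemma pow_iter:
  fixes x y :: int
  assumes p: "prime p" and e: "e \<ge> 1" and d: "int p ^ e dvd x - y"
  shows "int p ^ (e + f) dvd x ^ (p ^ f) - y ^ (p ^ f)"
proof (induction f)
  case 0 then show ?case using d by simp
next
  case (Suc f)
  have "int p ^ (e + f + 1) dvd (x ^ (p ^ f)) ^ p - (y ^ (p ^ f)) ^ p"
    using cong_pow_p[OF p _ Suc] e by simp
  then show ?case by (simp add: power_mult[symmetric] mult.commute)
qed

lemma fermat_int:
  fixes x :: int
  assumes p: "prime p"
  shows "int p dvd x ^ p - x"
proof -
  have pp: "p > 0" using p prime_gt_0_nat by blast
  define n where "n = nat (x mod int p)"
  have xn: "[x = int n] (mod int p)"
    using pp by (simp add: n_def cong_def)
  have "[int n ^ p = int n] (mod int p)"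
  proof (cases "p dvd n")
    case True
    then have "int p dvd int n" by simp
    moreover have "int n dvd int n ^ p" using pp by (simp add: dvd_power)
    ultimately have "int p dvd int n ^ p" by (rule dvd_trans)
    with \<open>int p dvd int n\<close> show ?thesis
      by (simp add: cong_iff_dvd_diff)
  next
    case False
    have "[n ^ (p - 1) = 1] (mod p)" by (rule fermat_theorem[OF p False])
    then have "[n ^ (p - 1) * n = 1 * n] (mod p)" by (rule cong_mult) simp
    moreover have "n ^ (p - 1) * n = n ^ p"
    proof -
      obtain q where "p = Suc q" using pp by (cases p) auto
      then show ?thesis by (simp add: power_Suc2)
    qed
    ultimately have "[n ^ p = n] (mod p)" by simp
    then show ?thesis by (metis cong_int_iff of_nat_power)
  qed
  then have "[x ^ p = x] (mod int p)"
    using xn by (meson cong_pow cong_sym cong_trans)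
  then show ?thesis by (simp add: cong_iff_dvd_diff)
qed

lemma dvd_E2:
  fixes m :: int
  assumes p: "prime p" and "i < l"
  shows "int p ^ (l - i) dvd m ^ (p ^ (l - i)) - m ^ (p ^ (l - i - 1))"
proof -
  obtain g where g: "l - i = Suc g" using assms by (metis Suc_diff_Suc)
  have "int p ^ (1 + g) dvd (m ^ p) ^ (p ^ g) - m ^ (p ^ g)"
    by (rule pow_iter[OF p]) (use fermat_int[OF p] in auto)
  then show ?thesis using g by (simp add: power_mult[symmetric])
qed

lemma dvd_E1:
  fixes m :: "nat \<Rightarrow> int"
  assumes p: "prime p" and "i < k" "k \<le> l"
  shows "int p ^ (l - i) dvd (\<Sum>s\<in>{i..k}. m s * int p ^ (k - s)) ^ (p ^ (l - k))
                              - (\<Sum>s\<in>{i+1..k}. m s * int p ^ (k - s)) ^ (p ^ (l - k))"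
proof -
  have "(\<Sum>s\<in>{i..k}. m s * int p ^ (k - s)) = m i * int p ^ (k - i) + (\<Sum>s\<in>{i+1..k}. m s * int p ^ (k - s))"
    using assms by (simp add: sum.atLeast_Suc_atMost)
  then have "int p ^ (k - i) dvd (\<Sum>s\<in>{i..k}. m s * int p ^ (k - s)) - (\<Sum>s\<in>{i+1..k}. m s * int p ^ (k - s))"
    by simp
  from pow_iter[OF p _ this, of "l - k"] assms
  show ?thesis by (simp add: add.commute)
qed

lemma phi_alt: "(\<Sum>s\<in>{i..k}. m s * int p ^ (k - s)) = phi p k i m"
  by (simp add: phi_def mult.commute)

lemma X1: assumes kl: "k \<le> l" shows "phi p l l (tjnd p l k m) = (if l \<le> k then phi p k l m ^ (p ^ (l - k)) else m k ^ (p ^ (l - l)))"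
   using kl by (simp add: phi_top tjnd_def)
lemma X2: assumes "u < k" "k \<le> l" shows "tjnd p l k m u = (phi p k u m ^ (p ^ (l - k)) - phi p k (Suc u) m ^ (p ^ (l - k))) div int p ^ (l - u)"
      using assms unfolding tjnd_def phi_alt by simp
lemma X3: assumes "\<not> u < k" "u < l" shows "tjnd p l k m u = (m k ^ (p ^ (l - u)) - m k ^ (p ^ (l - Suc u))) div int p ^ (l - u)"
proof -
  have "u \<noteq> l" "k \<le> u" using assms by auto
  then show ?thesis unfolding tjnd_def using assms(2) by (simp only: if_False if_True simp_thms) simp
qed

lemma phi_tjnd_aux:
  assumes p: "prime p" and kl: "k \<le> l" and ul: "u \<le> l"
  shows "phi p l u (tjnd p l k m) = (if u \<le> k then phi p k u m ^ (p ^ (l - k)) else m k ^ (p ^ (l - u)))"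
  using ul
proof (induction "l - u" arbitrary: u)
  case 0
  then have "u = l" by simp
  then show ?case using X1[OF kl, of p m] by simp
next
  case (Suc d u)
  have ul': "u < l" using Suc by simp
  have IH: "phi p l (Suc u) (tjnd p l k m) = (if Suc u \<le> k then phi p k (Suc u) m ^ (p ^ (l - k)) else m k ^ (p ^ (l - Suc u)))"
    using Suc(1)[of "Suc u"] Suc(2) ul' by simp
  let ?y = "tjnd p l k m"
  have ph: "phi p l u ?y = int p ^ (l - u) * ?y u + phi p l (Suc u) ?y"
    using ul' by (intro phi_step) simp
  show ?case
  proof (cases "u < k")
    case True
    have dv: "int p ^ (l - u) dvd phi p k u m ^ (p ^ (l - k)) - phi p k (Suc u) m ^ (p ^ (l - k))"
      using dvd_E1[OF p True kl, of m] unfolding phi_alt by simp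
    have "int p ^ (l - u) * ?y u = phi p k u m ^ (p ^ (l - k)) - phi p k (Suc u) m ^ (p ^ (l - k))"
      unfolding X2[OF True kl] using dv by (rule dvd_mult_div_cancel)
    moreover have "phi p l (Suc u) ?y = phi p k (Suc u) m ^ (p ^ (l - k))"
      using IH True by simp
    ultimately show ?thesis using ph True by simp
  next
    case False
    have dv: "int p ^ (l - u) dvd m k ^ (p ^ (l - u)) - m k ^ (p ^ (l - Suc u))"
    proof -
      have e: "l - u - 1 = l - Suc u" by simp
      show ?thesis using dvd_E2[OF p ul', of "m k"] unfolding e .
    qed
    have "int p ^ (l - u) * ?y u = m k ^ (p ^ (l - u)) - m k ^ (p ^ (l - Suc u))"
      unfolding X3[OF False ul'] using dv by (rule dvd_mult_div_cancel)
    moreover have "phi p l (Suc u) ?y = m k ^ (p ^ (l - Suc u))"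
      using IH False by simp
    moreover have "(if u \<le> k then phi p k u m ^ (p ^ (l - k)) else m k ^ (p ^ (l - u))) = m k ^ (p ^ (l - u))"
      using False by (auto simp: phi_top)
    ultimately show ?thesis using ph by simp
  qed
qed

lemma phi_tjnd:
  assumes p: "prime p" and kl: "k \<le> l" and ul: "u \<le> l"
  shows "phi p l u (tjnd p l k m) = phi p k (min u k) m ^ (p ^ (l - max u k))"
  using phi_tjnd_aux[OF assms, of m] by (auto simp: min_def max_def phi_top)



definition zideal :: "int set \<Rightarrow> bool" where
  "zideal Q \<longleftrightarrow> 0 \<in> Q \<and> (\<forall>x\<in>Q. \<forall>y\<in>Q. x + y \<in> Q) \<and> (\<forall>x\<in>Q. \<forall>c. c * x \<in> Q)"

definition zprime :: "int set \<Rightarrow> bool" where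
  "zprime Q \<longleftrightarrow> zideal Q \<and> 1 \<notin> Q \<and> (\<forall>x y. x * y \<in> Q \<longrightarrow> x \<in> Q \<or> y \<in> Q)"

lemma zi_0: "zideal Q \<Longrightarrow> 0 \<in> Q" by (simp add: zideal_def)
lemma zi_add: "zideal Q \<Longrightarrow> x \<in> Q \<Longrightarrow> y \<in> Q \<Longrightarrow> x + y \<in> Q" by (simp add: zideal_def)
lemma zi_multl: "zideal Q \<Longrightarrow> x \<in> Q \<Longrightarrow> c * x \<in> Q" by (simp add: zideal_def)
lemma zi_multr: "zideal Q \<Longrightarrow> x \<in> Q \<Longrightarrow> x * c \<in> Q" using zi_multl[of Q x c] by (simp add: mult.commute)
lemma zi_neg: "zideal Q \<Longrightarrow> x \<in> Q \<Longrightarrow> - x \<in> Q" using zi_multl[of Q x "-1"] by simp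
lemma zi_diff: "zideal Q \<Longrightarrow> x \<in> Q \<Longrightarrow> y \<in> Q \<Longrightarrow> x - y \<in> Q"
  using zi_add[of Q x "-y"] zi_neg[of Q y] by simp
lemma zi_pow: "zideal Q \<Longrightarrow> x \<in> Q \<Longrightarrow> n > 0 \<Longrightarrow> x ^ n \<in> Q"
  by (cases n) (auto intro: zi_multr)
lemma zp_zi: "zprime Q \<Longrightarrow> zideal Q" by (simp add: zprime_def)
lemma zp_mult: "zprime Q \<Longrightarrow> x * y \<in> Q \<Longrightarrow> x \<in> Q \<or> y \<in> Q" by (simp add: zprime_def)
lemma zp_1: "zprime Q \<Longrightarrow> 1 \<notin> Q" by (simp add: zprime_def)

definition PP :: "nat \<Rightarrow> int set \<Rightarrow> nat \<Rightarrow> nat \<Rightarrow> (nat \<Rightarrow> int) set" where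
  "PP p Q i k = {a \<in> elt k. \<forall>t \<le> min k i. phi p k t a \<in> Q}"

definition PL :: "nat \<Rightarrow> int set \<Rightarrow> nat \<Rightarrow> nat \<Rightarrow> (nat \<Rightarrow> int) set list" where
  "PL p Q i n = map (PP p Q i) [0..<Suc n]"

lemma PL_length[simp]: "length (PL p Q i n) = Suc n" by (simp add: PL_def)
lemma PL_nth: "k \<le> n \<Longrightarrow> PL p Q i n ! k = PP p Q i k"
  by (simp add: PL_def del: upt_Suc)

lemma PP_mem: "a \<in> PP p Q i k \<longleftrightarrow> a \<in> elt k \<and> (\<forall>t \<le> min k i. phi p k t a \<in> Q)"
  by (simp add: PP_def)

definition etop :: "int \<Rightarrow> nat \<Rightarrow> nat \<Rightarrow> int" where
  "etop c k = (\<lambda>j. if j = k then c else 0)"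

lemma etop_elt: "etop c k \<in> elt k" by (simp add: etop_def elt_def)
lemma phi_etop: "t \<le> k \<Longrightarrow> phi p k t (etop c k) = c"
  by (simp add: phi_def etop_def if_distrib cong: if_cong)

lemma phi_ind: "a \<in> elt m \<Longrightarrow> t \<le> m \<Longrightarrow> phi p (Suc m) t a = int p * phi p m t a"
proof -
  assume a: "a \<in> elt m" and t: "t \<le> m"
  have "a (Suc m) = 0" using a by (simp add: elt_def)
  then have "phi p (Suc m) t a = (\<Sum>s\<in>{t..m}. int p ^ (Suc m - s) * a s)"
    using t by (simp add: phi_def sum.cl_ivl_Suc)
  also have "\<dots> = (\<Sum>s\<in>{t..m}. int p * (int p ^ (m - s) * a s))"
    by (intro sum.cong refl) (simp add: Suc_diff_le)
  finally show ?thesis by (simp add: phi_def sum_distrib_left)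
qed

lemma elt_mono: "a \<in> elt m \<Longrightarrow> m \<le> k \<Longrightarrow> a \<in> elt k" by (simp add: elt_def)

lemma gN:
  assumes p: "prime p" and "i \<le> k" "i \<le> M" "u \<le> M"
  shows "phi p M u (tjnd p M i (tres p k i a)) = phi p k (min u i) a ^ (p ^ (M - max u i))"
  using assms by (simp add: phi_tjnd phi_tres)

lemma prod_ghost:
  assumes p: "prime p" and "i \<le> k" "j \<le> l" "u \<le> max i j"
  shows "phi p (max i j) u (rmult p (max i j) (tjnd p (max i j) i (tres p k i a)) (tjnd p (max i j) j (tres p l j b)))
    = phi p k (min u i) a ^ (p ^ (max i j - max u i)) * phi p l (min u j) b ^ (p ^ (max i j - max u j))"
  using assms by (simp add: phi_rmult gN)

lemma PP_rideal:
  assumes Q: "zideal Q"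
  shows "rideal p k (PP p Q i k)"
  unfolding rideal_def
proof (intro conjI ballI)
  show "PP p Q i k \<subseteq> elt k" by (auto simp: PP_def)
  have "zero_elt \<in> elt k" by (simp add: elt_def zero_elt_def)
  then show "zero_elt \<in> PP p Q i k" using Q by (simp add: PP_def phi_zero zi_0)
  fix a assume a: "a \<in> PP p Q i k"
  { fix b assume b: "b \<in> PP p Q i k"
    show "(\<lambda>i. a i + b i) \<in> PP p Q i k"
      using a b Q by (auto simp: PP_def phi_add elt_def intro: zi_add) }
  show "(\<lambda>i. - a i) \<in> PP p Q i k"
    using a Q by (auto simp: PP_def phi_neg elt_def intro: zi_neg)
  fix b assume b: "b \<in> elt k"
  show "rmult p k b a \<in> PP p Q i k"
    using a Q by (auto simp: PP_def phi_rmult rmult_elt intro: zi_multl)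
qed

lemma PP_ind:
  assumes Q: "zideal Q" and a: "a \<in> PP p Q i m"
  shows "a \<in> PP p Q i (Suc m)"
proof -
  have ae: "a \<in> elt m" using a by (simp add: PP_def)
  show ?thesis unfolding PP_mem
  proof (intro conjI allI impI)
    show "a \<in> elt (Suc m)" using ae by (simp add: elt_def)
    fix t assume t: "t \<le> min (Suc m) i"
    show "phi p (Suc m) t a \<in> Q"
    proof (cases "t \<le> m")
      case True
      then have "phi p m t a \<in> Q" using a t by (simp add: PP_def)
      then show ?thesis using True ae Q by (simp add: phi_ind zi_multl)
    next
      case False
      then have "t = Suc m" using t by simp
      then show ?thesis using ae Q by (simp add: phi_top elt_def zi_0)
    qed
  qed
qed

lemma PP_res:
  assumes a: "a \<in> PP p Q i (Suc m)"
  shows "tres p (Suc m) m a \<in> PP p Q i m"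
  using a by (auto simp: PP_def tres_elt phi_tres)

lemma PP_jnd:
  assumes p: "prime p" and Q: "zideal Q" and a: "a \<in> PP p Q i m"
  shows "tjnd p (Suc m) m a \<in> PP p Q i (Suc m)"
  unfolding PP_mem
proof (intro conjI allI impI)
  show "tjnd p (Suc m) m a \<in> elt (Suc m)" by (simp add: tjnd_elt)
  fix u assume u: "u \<le> min (Suc m) i"
  have "min u m \<le> min m i" using u by (auto simp add: min_def split: if_splits)
  then have "phi p m (min u m) a \<in> Q" using a by (simp add: PP_def)
  moreover have "p ^ (Suc m - max u m) > 0" using p prime_gt_0_nat by simp
  ultimately show "phi p (Suc m) u (tjnd p (Suc m) m a) \<in> Q"
    using u p Q by (simp add: phi_tjnd zi_pow)
qed

lemma PL_tideal:
  assumes p: "prime p" and Q: "zideal Q"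
  shows "tideal p n (PL p Q i n)"
  unfolding tideal_def
proof (intro conjI allI impI ballI)
  show "length (PL p Q i n) = Suc n" by simp
  fix k assume "k \<le> n" then show "rideal p k (PL p Q i n ! k)" using Q by (simp add: PL_nth PP_rideal)
next
  fix k assume k: "k \<in> {1..n}"
  then obtain m where m: "k = Suc m" "m < n" by (cases k) auto
  have e1: "PL p Q i n ! k = PP p Q i (Suc m)" and e2: "PL p Q i n ! (k - 1) = PP p Q i m"
    using m by (simp_all add: PL_nth)
  show "tind k (k - 1) ` (PL p Q i n ! (k - 1)) \<subseteq> PL p Q i n ! k"
    unfolding e1 e2 using Q by (auto simp: tind_def PP_ind)
  show "tres p k (k - 1) ` (PL p Q i n ! k) \<subseteq> PL p Q i n ! (k - 1)"
    unfolding e1 e2 using m by (auto simp: PP_res)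
  show "tjnd p k (k - 1) ` (PL p Q i n ! (k - 1)) \<subseteq> PL p Q i n ! k"
    unfolding e1 e2 using m p Q by (auto simp: PP_jnd)
qed

lemma PL_prime:
  assumes p: "prime p" and Q: "zprime Q"
  shows "tprime p n (PL p Q i n)"
  unfolding tprime_def
proof (intro conjI allI impI ballI)
  show "tideal p n (PL p Q i n)" using PL_tideal[OF p zp_zi[OF Q]] .
  have "etop 1 0 \<notin> PP p Q i 0" using Q by (simp add: PP_def phi_etop zp_1)
  moreover have "etop 1 0 \<in> elt 0" by (rule etop_elt)
  ultimately show "PL p Q i n ! 0 \<noteq> elt 0" by (auto simp: PL_nth)
next
  fix k l a b
  assume k: "k \<le> n" and l: "l \<le> k" and a: "a \<in> elt k" and b: "b \<in> elt l"
    and H: "\<forall>ia\<le>k. \<forall>j\<le>l. rmult p (max ia j) (tjnd p (max ia j) ia (tres p k ia a))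
              (tjnd p (max ia j) j (tres p l j b)) \<in> PL p Q i n ! max ia j"
  show "a \<in> PL p Q i n ! k \<or> b \<in> PL p Q i n ! l"
  proof (rule ccontr)
    assume "\<not> ?thesis"
    then have na: "a \<notin> PP p Q i k" and nb: "b \<notin> PP p Q i l" using k l by (auto simp: PL_nth)
    obtain t where t: "t \<le> min k i" "phi p k t a \<notin> Q" using na a by (auto simp: PP_def)
    obtain s where s: "s \<le> min l i" "phi p l s b \<notin> Q" using nb b by (auto simp: PP_def)
    let ?M = "max t s"
    have "rmult p ?M (tjnd p ?M t (tres p k t a)) (tjnd p ?M s (tres p l s b)) \<in> PP p Q i ?M"
      using H t s k l by (auto simp: PL_nth)
    then have "phi p ?M ?M (rmult p ?M (tjnd p ?M t (tres p k t a)) (tjnd p ?M s (tres p l s b))) \<in> Q"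
      using t s by (auto simp: PP_def)
    moreover have "phi p ?M ?M (rmult p ?M (tjnd p ?M t (tres p k t a)) (tjnd p ?M s (tres p l s b)))
       = phi p k t a * phi p l s b"
    proof -
      have "phi p ?M ?M (rmult p ?M (tjnd p ?M t (tres p k t a)) (tjnd p ?M s (tres p l s b)))
         = phi p k (min ?M t) a ^ (p ^ (?M - max ?M t)) * phi p l (min ?M s) b ^ (p ^ (?M - max ?M s))"
        by (rule prod_ghost[OF p]) (use t s in auto)
      moreover have "min ?M t = t" "min ?M s = s" "?M - max ?M t = 0" "?M - max ?M s = 0" by auto
      ultimately show ?thesis by simp
    qed
    ultimately show False using t s zp_mult[OF Q] by auto
  qed
qed




definition Qd :: "nat \<Rightarrow> int set" where "Qd q = {x. int q dvd x}"

lemma zprime_Qd: "prime q \<Longrightarrow> zprime (Qd q)"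
  unfolding zprime_def zideal_def Qd_def
  using prime_dvd_mult_iff[of "int q"] prime_gt_1_nat[of q] by auto

lemma zprime_0: "zprime {0}"
  unfolding zprime_def zideal_def by auto

lemma p_notin_Qd: "prime p \<Longrightarrow> prime q \<Longrightarrow> q \<noteq> p \<Longrightarrow> int p \<notin> Qd q"
  unfolding Qd_def by (metis primes_dvd_imp_eq of_nat_dvd_iff mem_Collect_eq)

lemma PP_eq: "k \<le> i \<Longrightarrow> k \<le> i' \<Longrightarrow> PP p Q i k = PP p Q i' k"
  by (simp add: PP_def min_def)

lemma PL_snoc:
  assumes "\<And>k. k \<le> n \<Longrightarrow> PP p Q i k = PP p Q i' k"
  shows "PL p Q i n @ [PP p Q i' (Suc n)] = PL p Q i' (Suc n)"
proof (rule nth_equalityI)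
  show "length (PL p Q i n @ [PP p Q i' (Suc n)]) = length (PL p Q i' (Suc n))" by simp
  fix k assume "k < length (PL p Q i n @ [PP p Q i' (Suc n)])"
  then have k: "k \<le> Suc n" by simp
  show "(PL p Q i n @ [PP p Q i' (Suc n)]) ! k = PL p Q i' (Suc n) ! k"
  proof (cases "k \<le> n")
    case True then show ?thesis using assms[OF True] k by (simp add: nth_append PL_nth)
  next
    case False then have "k = Suc n" using k by simp
    then show ?thesis by (simp add: nth_append PL_nth)
  qed
qed

lemma PL_last: "last (PL p Q i n) = PP p Q i n"
  by (simp add: PL_def)

lemma Lset_PP:
  assumes "i \<le> n"
  shows "Lset p (Suc n) (PP p Q i n) = PP p Q i (Suc n)"
  unfolding Lset_def PP_def using assms
  by (auto simp: tres_elt phi_tres min_def)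

lemma Lop_PL: "i \<le> n \<Longrightarrow> Lop p (PL p Q i n) = PL p Q i (Suc n)"
  unfolding Lop_def PL_last PL_length Lset_PP
  by (simp add: Lset_PP PL_snoc)

lemma Sset_PP:
  assumes p: "prime p" and Q: "zprime Q" and pQ: "int p \<notin> Q"
  shows "Sset p (Suc n) (PP p Q n n) = PP p Q (Suc n) (Suc n)"
proof
  have QI: "zideal Q" using Q by (rule zp_zi)
  show "Sset p (Suc n) (PP p Q n n) \<subseteq> PP p Q (Suc n) (Suc n)"
    unfolding Sset_def
  proof (rule Inter_lower, safe)
    show "rideal p (Suc n) (PP p Q (Suc n) (Suc n))" by (rule PP_rideal[OF QI])
  next
    fix x assume "x \<in> PP p Q n n"
    then show "tind (Suc n) (Suc n - 1) x \<in> PP p Q (Suc n) (Suc n)"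
      using PP_ind[OF QI, of x p "Suc n" n] PP_eq[of n n "Suc n"] by (simp add: tind_def)
  next
    fix x assume "x \<in> PP p Q n n"
    then show "tjnd p (Suc n) (Suc n - 1) x \<in> PP p Q (Suc n) (Suc n)"
      using PP_jnd[OF p QI, of x "Suc n" n] PP_eq[of n n "Suc n"] by simp
  qed
  show "PP p Q (Suc n) (Suc n) \<subseteq> Sset p (Suc n) (PP p Q n n)"
    unfolding Sset_def
  proof (rule Inter_greatest, safe)
    fix J a
    assume J: "rideal p (Suc n) J" and JI: "tind (Suc n) (Suc n - 1) ` PP p Q n n \<union> tjnd p (Suc n) (Suc n - 1) ` PP p Q n n \<subseteq> J"
      and a: "a \<in> PP p Q (Suc n) (Suc n)"
    define c where "c = a (Suc n)"
    have ae: "a \<in> elt (Suc n)" using a by (simp add: PP_def)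
    have cQ: "c \<in> Q" using a phi_top[of p "Suc n" a] unfolding PP_def c_def by (metis (no_types, lifting) le_refl mem_Collect_eq min.idem)
    define x where "x = etop c n"
    have xP: "x \<in> PP p Q n n" using cQ by (simp add: PP_def x_def etop_elt phi_etop)
    have jx: "tjnd p (Suc n) n x \<in> J" using JI xP by auto
    have jxP: "tjnd p (Suc n) n x \<in> PP p Q n (Suc n)" by (rule PP_jnd[OF p QI xP])
    have jtop: "tjnd p (Suc n) n x (Suc n) = c" by (simp add: tjnd_def x_def etop_def)
    define r where "r = (\<lambda>j. a j - tjnd p (Suc n) n x j)"
    have re: "r \<in> elt n"
      unfolding elt_def
    proof (intro CollectI allI impI)
      fix i assume i: "n < i"
      show "r i = 0"
      proof (cases "i = Suc n")
        case True then show ?thesis using jtop by (simp add: r_def c_def)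
      next
        case False
        then have "Suc n < i" using i by simp
        then show ?thesis using ae tjnd_elt[of n "Suc n" p x] by (simp add: r_def elt_def)
      qed
    qed
    have rP: "r \<in> PP p Q n n"
      unfolding PP_mem
    proof (intro conjI allI impI)
      show "r \<in> elt n" by (rule re)
      fix t assume t: "t \<le> min n n"
      have "phi p (Suc n) t r = phi p (Suc n) t a - phi p (Suc n) t (tjnd p (Suc n) n x)"
        by (simp add: r_def phi_diff)
      moreover have "phi p (Suc n) t a \<in> Q" using a t by (simp add: PP_def)
      moreover have "phi p (Suc n) t (tjnd p (Suc n) n x) \<in> Q" using jxP t by (simp add: PP_def)
      ultimately have "phi p (Suc n) t r \<in> Q" using QI by (simp add: zi_diff)
      then have "int p * phi p n t r \<in> Q" using re t by (simp add: phi_ind)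
      then show "phi p n t r \<in> Q" using zp_mult[OF Q] pQ by blast
    qed
    have rJ: "r \<in> J" using JI rP by (force simp: tind_def)
    have "(\<lambda>j. r j + tjnd p (Suc n) n x j) \<in> J" using J rJ jx by (simp add: rideal_def)
    moreover have "(\<lambda>j. r j + tjnd p (Suc n) n x j) = a" by (simp add: r_def)
    ultimately show "a \<in> J" by simp
  qed
qed

lemma Sop_PL:
  assumes p: "prime p" and Q: "zprime Q" and pQ: "int p \<notin> Q"
  shows "Sop p (PL p Q n n) = PL p Q (Suc n) (Suc n)"
  unfolding Sop_def PL_last PL_length Sset_PP[OF assms]
  by (rule PL_snoc) (rule PP_eq; simp)

lemma qid_PL: "qid q = PL p (Qd q) 0 0"
  by (simp add: qid_def PL_def PP_def Qd_def phi_top)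

lemma zero_PL:
  assumes p: "p > 0"
  shows "zero_tideal r = PL p {0} r r"
proof (rule nth_equalityI)
  show "length (zero_tideal r) = length (PL p {0} r r)" by (simp add: zero_tideal_def)
  fix k assume "k < length (zero_tideal r)"
  then have k: "k \<le> r" by (simp add: zero_tideal_def)
  have "{zero_elt} = PP p {0} r k"
  proof safe
    show "zero_elt \<in> PP p {0} r k" using PP_rideal[OF zp_zi[OF zprime_0]] by (simp add: rideal_def)
  next
    fix a assume a: "a \<in> PP p {0} r k"
    show "a = zero_elt"
    proof (rule gh_eq[OF p])
      show "a \<in> elt k" using a by (simp add: PP_def)
      show "zero_elt \<in> elt k" by (simp add: elt_def zero_elt_def)
      fix t assume "t \<le> k" then show "phi p k t a = phi p k t zero_elt"
        using a k by (simp add: PP_def phi_zero)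
    qed
  qed
  moreover have "zero_tideal r ! k = {zero_elt}" using k
    by (simp add: zero_tideal_def nth_replicate del: replicate_Suc)
  ultimately show "zero_tideal r ! k = PL p {0} r r ! k" using k by (simp add: PL_nth)
qed

lemma Sop_iter:
  assumes p: "prime p" and q: "prime q" "q \<noteq> p"
  shows "(Sop p ^^ s) (qid q) = PL p (Qd q) s s"
proof (induction s)
  case 0 show ?case by (simp add: qid_PL)
next
  case (Suc s) then show ?case
    using Sop_PL[OF p zprime_Qd[OF q(1)] p_notin_Qd[OF p q]] by simp
qed

lemma Lop_iter: "(Lop p ^^ t) (PL p Q s s) = PL p Q s (s + t)"
  by (induction t) (simp_all add: Lop_PL)

lemma std_chain_PL:
  assumes p: "prime p" and q: "prime q" "q \<noteq> p" and j: "1 \<le> j" "j \<le> r + 1"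
  shows "std_chain p r q j = PL p (Qd q) (r + 1 - j) r"
  using j by (simp add: std_chain_def Sop_iter[OF p q] Lop_iter)




definition zelt :: "nat \<Rightarrow> nat \<Rightarrow> nat \<Rightarrow> int" where
  "zelt p i = (\<lambda>j. if j = i then int p else if Suc j = i then -1 else 0)"

lemma phi_zero_range:
  assumes "\<And>s. t \<le> s \<Longrightarrow> s < t' \<Longrightarrow> a s = 0" "t \<le> t'"
  shows "phi p k t a = phi p k t' a"
  using assms
proof (induction "t' - t" arbitrary: t)
  case 0 then show ?case by simp
next
  case (Suc d t)
  have "t < t'" using Suc by simp
  have IH: "phi p k (Suc t) a = phi p k t' a" using Suc by auto
  have at: "a t = 0" using Suc \<open>t < t'\<close> by simp
  show ?case
  proof (cases "t \<le> k")
    case True then show ?thesis using phi_step[OF True, of p a] IH at by simp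
  next
    case False then have "k < t" "k < Suc t" by auto
    then show ?thesis using IH phi_above by metis
  qed
qed

lemma zelt_elt: "zelt p i \<in> elt i" by (simp add: zelt_def elt_def)

lemma phi_zelt:
  assumes "1 \<le> i" "t \<le> i"
  shows "phi p i t (zelt p i) = (if t = i then int p else 0)"
proof (cases "t = i")
  case True then show ?thesis by (simp add: phi_top zelt_def)
next
  case False
  obtain m where m: "i = Suc m" using assms by (cases i) auto
  have "phi p i t (zelt p i) = phi p i m (zelt p i)"
    by (rule phi_zero_range) (use assms False m in \<open>auto simp: zelt_def\<close>)
  also have "\<dots> = int p ^ (i - m) * zelt p i m + phi p i (Suc m) (zelt p i)"
    using m by (intro phi_step) simp
  also have "\<dots> = 0" using m by (simp add: phi_top zelt_def)
  finally show ?thesis using False by simp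
qed

lemma zelt_in: "1 \<le> i \<Longrightarrow> zideal Q \<Longrightarrow> zelt p i \<in> PP p Q (i - 1) i"
  by (auto simp: PP_def zelt_elt phi_zelt zi_0)

lemma zelt_notin: "1 \<le> i \<Longrightarrow> i \<le> i' \<Longrightarrow> int p \<notin> Q \<Longrightarrow> zelt p i \<notin> PP p Q i' i"
  by (auto simp: PP_def phi_zelt)

lemma PL_sub_i: "i' \<le> i \<Longrightarrow> tsubset (PL p Q i n) (PL p Q i' n)"
  by (auto simp: tsubset_def PL_nth PP_def less_Suc_eq_le)

lemma PL_sub_0: "zideal Q \<Longrightarrow> tsubset (PL p {0} i n) (PL p Q i n)"
  by (auto simp: tsubset_def PL_nth PP_def less_Suc_eq_le zi_0)

lemma std_chain_ok:
  assumes p: "prime p" and q: "prime q" "q \<noteq> p"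
  shows "prime_chain p r (std_chain p r q) (r + 1)"
  unfolding prime_chain_def
proof (intro conjI allI impI)
  have pp: "p > 0" using p prime_gt_0_nat by blast
  have QP: "zprime (Qd q)" by (rule zprime_Qd[OF q(1)])
  have pQ: "int p \<notin> Qd q" by (rule p_notin_Qd[OF p q])
  have C0: "std_chain p r q 0 = PL p {0} r r" by (simp add: std_chain_def zero_PL[OF pp])
  have Cj: "\<And>j. 1 \<le> j \<Longrightarrow> j \<le> r + 1 \<Longrightarrow> std_chain p r q j = PL p (Qd q) (r + 1 - j) r"
    by (rule std_chain_PL[OF p q])
  fix j
  { assume j: "j \<le> r + 1"
    show "tprime p r (std_chain p r q j)"
    proof (cases "j = 0")
      case True then show ?thesis using C0 PL_prime[OF p zprime_0] by simp
    next
      case False then show ?thesis using Cj[of j] j PL_prime[OF p QP] by simp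
    qed }
  { assume j: "j < r + 1"
    show "tpsubset (std_chain p r q j) (std_chain p r q (Suc j))"
      unfolding tpsubset_def
    proof (cases "j = 0")
      case True
      have C1: "std_chain p r q (Suc j) = PL p (Qd q) r r" using Cj[of 1] True by simp
      have "etop (int q) 0 \<in> PP p (Qd q) r 0" by (simp add: PP_def etop_elt phi_etop Qd_def)
      moreover have "etop (int q) 0 \<notin> PP p {0} r 0" using q by (simp add: PP_def phi_etop prime_gt_0_nat)
      ultimately have "PL p {0} r r \<noteq> PL p (Qd q) r r" by (metis PL_nth le0)
      then show "tsubset (std_chain p r q j) (std_chain p r q (Suc j)) \<and> std_chain p r q j \<noteq> std_chain p r q (Suc j)"
        using C0 C1 True PL_sub_0[OF zp_zi[OF QP]] by simp
    next
      case False
      define i where "i = r + 1 - j"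
      have i1: "1 \<le> i" "i \<le> r" using j False by (auto simp: i_def)
      have e1: "std_chain p r q j = PL p (Qd q) i r" using Cj[of j] j False by (simp add: i_def)
      have e2: "std_chain p r q (Suc j) = PL p (Qd q) (i - 1) r" using Cj[of "Suc j"] j False by (simp add: i_def)
      have "zelt p i \<in> PP p (Qd q) (i - 1) i" by (rule zelt_in[OF i1(1) zp_zi[OF QP]])
      moreover have "zelt p i \<notin> PP p (Qd q) i i" by (rule zelt_notin[OF i1(1) le_refl pQ])
      ultimately have "PL p (Qd q) i r \<noteq> PL p (Qd q) (i - 1) r" using i1 by (metis PL_nth)
      then show "tsubset (std_chain p r q j) (std_chain p r q (Suc j)) \<and> std_chain p r q j \<noteq> std_chain p r q (Suc j)"
        using e1 e2 PL_sub_i[of "i - 1" i] by simp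
    qed }
qed




lemma rmult_comm: "p > 0 \<Longrightarrow> rmult p k a b = rmult p k b a"
  by (rule gh_eq[where k=k]) (auto simp: rmult_elt phi_rmult)

lemma smult_rmult: "p > 0 \<Longrightarrow> y \<in> elt k \<Longrightarrow> rmult p k (etop c k) y = (\<lambda>j. c * y j)"
proof (rule gh_eq[where k=k])
  assume "p > 0" "y \<in> elt k"
  then show "p > 0" "rmult p k (etop c k) y \<in> elt k" "(\<lambda>j. c * y j) \<in> elt k"
    by (auto simp: rmult_elt) (simp add: elt_def)
  fix t assume "t \<le> k" then show "phi p k t (rmult p k (etop c k) y) = phi p k t (\<lambda>j. c * y j)"
    by (simp add: phi_rmult phi_etop phi_smult)
qed

lemma rid_elt: "rideal p k I \<Longrightarrow> a \<in> I \<Longrightarrow> a \<in> elt k" by (auto simp: rideal_def)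
lemma rid_add: "rideal p k I \<Longrightarrow> a \<in> I \<Longrightarrow> b \<in> I \<Longrightarrow> (\<lambda>j. a j + b j) \<in> I" by (simp add: rideal_def)
lemma rid_neg: "rideal p k I \<Longrightarrow> a \<in> I \<Longrightarrow> (\<lambda>j. - a j) \<in> I" by (simp add: rideal_def)
lemma rid_diff: "rideal p k I \<Longrightarrow> a \<in> I \<Longrightarrow> b \<in> I \<Longrightarrow> (\<lambda>j. a j - b j) \<in> I"
  using rid_add[of p k I a "\<lambda>j. - b j"] rid_neg[of p k I b] by simp
lemma rid_mult: "rideal p k I \<Longrightarrow> a \<in> I \<Longrightarrow> b \<in> elt k \<Longrightarrow> rmult p k b a \<in> I" by (simp add: rideal_def)
lemma rid_mult2: "p > 0 \<Longrightarrow> rideal p k I \<Longrightarrow> a \<in> I \<Longrightarrow> b \<in> elt k \<Longrightarrow> rmult p k a b \<in> I"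
  using rid_mult rmult_comm by metis
lemma rid_smult: "p > 0 \<Longrightarrow> rideal p k I \<Longrightarrow> a \<in> I \<Longrightarrow> (\<lambda>j. c * a j) \<in> I"
  using rid_mult[of p k I a "etop c k"] smult_rmult[of p a k c] rid_elt[of p k I a] etop_elt by simp

lemma phi_Suc: "t \<le> m \<Longrightarrow> phi p (Suc m) t a = a (Suc m) + int p * phi p m t a"
proof -
  assume t: "t \<le> m"
  have "phi p (Suc m) t a = (\<Sum>s\<in>{t..m}. int p ^ (Suc m - s) * a s) + a (Suc m)"
    using t by (simp add: phi_def)
  also have "(\<Sum>s\<in>{t..m}. int p ^ (Suc m - s) * a s) = (\<Sum>s\<in>{t..m}. int p * (int p ^ (m - s) * a s))"
    by (intro sum.cong refl) (simp add: Suc_diff_le)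
  finally show ?thesis by (simp add: phi_def sum_distrib_left)
qed

lemma phi_dvd_p: "a k = 0 \<Longrightarrow> int p dvd phi p k t a"
  unfolding phi_def
proof (rule dvd_sum)
  fix s assume "a k = 0" "s \<in> {t..k}"
  then show "int p dvd int p ^ (k - s) * a s"
    by (cases "s = k") (auto intro: dvd_mult2 simp: dvd_power)
qed

lemma jr_id: "prime p \<Longrightarrow> a \<in> elt n \<Longrightarrow> tjnd p n n (tres p n n a) = a"
  by (rule gh_eq[where p=p and k=n]) (auto simp: prime_gt_0_nat tjnd_elt gN)

lemma phi_etop_Suc: "t \<le> m \<Longrightarrow> phi p (Suc m) t (etop c m) = int p * c"
  by (simp add: phi_ind etop_elt phi_etop)
lemma etop_Suc_top: "etop c m (Suc m) = 0" by (simp add: etop_def)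

lemma trunc_prime:
  assumes "tprime p (Suc m) P"
  shows "tprime p m (take (Suc m) P)"
proof -
  have len: "length P = Suc (Suc m)" using assms by (simp add: tprime_def tideal_def)
  have nth: "\<And>k. k \<le> m \<Longrightarrow> take (Suc m) P ! k = P ! k" by simp
  have A: "tideal p (Suc m) P" "P ! 0 \<noteq> elt 0" and
    B: "\<forall>k\<le>Suc m. \<forall>l\<le>k. \<forall>a\<in>elt k. \<forall>b\<in>elt l.
        (\<forall>i\<le>k. \<forall>j\<le>l. rmult p (max i j) (tjnd p (max i j) i (tres p k i a))
                                         (tjnd p (max i j) j (tres p l j b)) \<in> P ! (max i j))
        \<longrightarrow> a \<in> P ! k \<or> b \<in> P ! l"
    using assms by (simp_all add: tprime_def)
  have C: "\<forall>k\<le>Suc m. rideal p k (P ! k)"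
     "\<forall>k\<in>{1..Suc m}. tind k (k - 1) ` (P ! (k - 1)) \<subseteq> P ! k
                   \<and> tres p k (k - 1) ` (P ! k) \<subseteq> P ! (k - 1)
                   \<and> tjnd p k (k - 1) ` (P ! (k - 1)) \<subseteq> P ! k"
    using A(1) by (simp_all add: tideal_def)
  have "tideal p m (take (Suc m) P)"
    unfolding tideal_def
  proof (intro conjI allI impI ballI)
    show "length (take (Suc m) P) = Suc m" using len by simp
    fix k assume "k \<le> m" then show "rideal p k (take (Suc m) P ! k)" using C(1) by simp
  next
    fix k assume k: "k \<in> {1..m}"
    then have "k \<in> {1..Suc m}" "k - 1 \<le> m" "k \<le> m" by auto
    then show "tind k (k - 1) ` (take (Suc m) P ! (k - 1)) \<subseteq> take (Suc m) P ! k"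
      "tres p k (k - 1) ` (take (Suc m) P ! k) \<subseteq> take (Suc m) P ! (k - 1)"
      "tjnd p k (k - 1) ` (take (Suc m) P ! (k - 1)) \<subseteq> take (Suc m) P ! k"
      using C(2) by (simp_all add: nth)
  qed
  moreover have "take (Suc m) P ! 0 \<noteq> elt 0" using A(2) by simp
  moreover have "\<forall>k\<le>m. \<forall>l\<le>k. \<forall>a\<in>elt k. \<forall>b\<in>elt l.
        (\<forall>i\<le>k. \<forall>j\<le>l. rmult p (max i j) (tjnd p (max i j) i (tres p k i a))
                                         (tjnd p (max i j) j (tres p l j b)) \<in> take (Suc m) P ! (max i j))
        \<longrightarrow> a \<in> take (Suc m) P ! k \<or> b \<in> take (Suc m) P ! l"
  proof (intro allI impI ballI)
    fix k l a b assume k: "k \<le> m" and l: "l \<le> k" and a: "a \<in> elt k" and b: "b \<in> elt l"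
      and H: "\<forall>i\<le>k. \<forall>j\<le>l. rmult p (max i j) (tjnd p (max i j) i (tres p k i a))
                                         (tjnd p (max i j) j (tres p l j b)) \<in> take (Suc m) P ! (max i j)"
    have "\<forall>i\<le>k. \<forall>j\<le>l. rmult p (max i j) (tjnd p (max i j) i (tres p k i a))
                                         (tjnd p (max i j) j (tres p l j b)) \<in> P ! (max i j)"
    proof (intro allI impI)
      fix i j assume "i \<le> k" "j \<le> l"
      then have "max i j \<le> m" using k l by simp
      then show "rmult p (max i j) (tjnd p (max i j) i (tres p k i a))
                                         (tjnd p (max i j) j (tres p l j b)) \<in> P ! (max i j)"
        using H \<open>i \<le> k\<close> \<open>j \<le> l\<close> nth by metis
    qed
    then have "a \<in> P ! k \<or> b \<in> P ! l" using B k l a b by simp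
    then show "a \<in> take (Suc m) P ! k \<or> b \<in> take (Suc m) P ! l" using k l by simp
  qed
  ultimately show ?thesis by (simp add: tprime_def)
qed




locale cls =
  fixes p :: nat and Q :: "int set" and i m :: nat and P :: "(nat \<Rightarrow> int) set list"
  assumes p: "prime p" and Q: "zprime Q" and im: "i \<le> m" and P: "tprime p (Suc m) P"
    and Pt: "\<And>k. k \<le> m \<Longrightarrow> P ! k = PP p Q i k"
begin

lemma pp: "p > 0" using p prime_gt_0_nat by blast
lemma QI: "zideal Q" using Q by (rule zp_zi)

lemma RI: "rideal p (Suc m) (P ! Suc m)"
  using P by (simp add: tprime_def tideal_def)

lemma TT: "tind (Suc m) m ` (P ! m) \<subseteq> P ! Suc m \<and> tres p (Suc m) m ` (P ! Suc m) \<subseteq> P ! m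
     \<and> tjnd p (Suc m) m ` (P ! m) \<subseteq> P ! Suc m"
proof -
  have "\<forall>k\<in>{1..Suc m}. tind k (k - 1) ` (P ! (k - 1)) \<subseteq> P ! k
                   \<and> tres p k (k - 1) ` (P ! k) \<subseteq> P ! (k - 1)
                   \<and> tjnd p k (k - 1) ` (P ! (k - 1)) \<subseteq> P ! k"
    using P by (simp add: tprime_def tideal_def)
  then show ?thesis by (metis atLeastAtMost_iff diff_Suc_1 le_add1 le_refl plus_1_eq_Suc)
qed

lemma Tind: "x \<in> PP p Q i m \<Longrightarrow> x \<in> P ! Suc m"
  using TT Pt[of m] by (auto simp: tind_def)
lemma Tres: "a \<in> P ! Suc m \<Longrightarrow> tres p (Suc m) m a \<in> PP p Q i m"
  using TT Pt[of m] by auto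
lemma Tjnd: "x \<in> PP p Q i m \<Longrightarrow> tjnd p (Suc m) m x \<in> P ! Suc m"
  using TT Pt[of m] by auto

lemma TP:
  assumes "k \<le> Suc m" "l \<le> k" "a \<in> elt k" "b \<in> elt l"
    "\<And>i1 j. i1 \<le> k \<Longrightarrow> j \<le> l \<Longrightarrow> rmult p (max i1 j) (tjnd p (max i1 j) i1 (tres p k i1 a))
          (tjnd p (max i1 j) j (tres p l j b)) \<in> P ! (max i1 j)"
  shows "a \<in> P ! k \<or> b \<in> P ! l"
  using P assms unfolding tprime_def by blast

lemma S1: "P ! Suc m \<subseteq> PP p Q i (Suc m)"
proof
  fix a assume a: "a \<in> P ! Suc m"
  have ae: "a \<in> elt (Suc m)" using RI a by (rule rid_elt)
  have r: "tres p (Suc m) m a \<in> PP p Q i m" using Tres[OF a] .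
  show "a \<in> PP p Q i (Suc m)" unfolding PP_mem
  proof (intro conjI allI impI)
    show "a \<in> elt (Suc m)" by (rule ae)
    fix t assume t: "t \<le> min (Suc m) i"
    then have "t \<le> min m i" using im by simp
    then have "phi p m t (tres p (Suc m) m a) \<in> Q" using r by (simp add: PP_def)
    then show "phi p (Suc m) t a \<in> Q" using \<open>t \<le> min m i\<close> by (simp add: phi_tres)
  qed
qed

lemma pow_pos: "p ^ e > 0" using pp by simp

lemma S2:
  assumes a: "a \<in> PP p Q i (Suc m)" and i1: "i1 < Suc m"
  shows "tjnd p (Suc m) i1 (tres p (Suc m) i1 a) \<in> P ! Suc m"
proof -
  have i1m: "i1 \<le> m" using i1 by simp
  define x where "x = tjnd p m i1 (tres p (Suc m) i1 a)"
  have phx: "\<And>t. t \<le> m \<Longrightarrow> phi p m t x = phi p (Suc m) (min t i1) a ^ (p ^ (m - max t i1))"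
    unfolding x_def by (rule gN[OF p]) (use i1m in auto)
  have xP: "x \<in> PP p Q i m" unfolding PP_mem
  proof (intro conjI allI impI)
    show "x \<in> elt m" unfolding x_def by (rule tjnd_elt[OF i1m])
    fix t assume t: "t \<le> min m i"
    have "min t i1 \<le> min (Suc m) i" using t by (auto simp add: min_def split: if_splits)
    then have "phi p (Suc m) (min t i1) a \<in> Q" using a by (simp add: PP_def)
    then have "phi p (Suc m) (min t i1) a ^ (p ^ (m - max t i1)) \<in> Q" by (rule zi_pow[OF QI _ pow_pos])
    then show "phi p m t x \<in> Q" using phx t by simp
  qed
  have jx: "tjnd p (Suc m) m x \<in> P ! Suc m" by (rule Tjnd[OF xP])
  have eq: "tjnd p (Suc m) m x = tjnd p (Suc m) i1 (tres p (Suc m) i1 a)"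
  proof (rule gh_eq[OF pp])
    show "tjnd p (Suc m) m x \<in> elt (Suc m)" by (simp add: tjnd_elt)
    show "tjnd p (Suc m) i1 (tres p (Suc m) i1 a) \<in> elt (Suc m)" using i1 by (simp add: tjnd_elt)
    fix u assume u: "u \<le> Suc m"
    have L: "phi p (Suc m) u (tjnd p (Suc m) m x) = phi p m (min u m) x ^ (p ^ (Suc m - max u m))"
      by (rule phi_tjnd[OF p]) (use u in auto)
    have R: "phi p (Suc m) u (tjnd p (Suc m) i1 (tres p (Suc m) i1 a))
        = phi p (Suc m) (min u i1) a ^ (p ^ (Suc m - max u i1))"
      by (rule gN[OF p]) (use u i1 in auto)
    show "phi p (Suc m) u (tjnd p (Suc m) m x) = phi p (Suc m) u (tjnd p (Suc m) i1 (tres p (Suc m) i1 a))"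
    proof (cases "u \<le> m")
      case True
      have e1: "min u m = u" "Suc m - max u m = 1" using True by auto
      have e2: "Suc m - max u i1 = Suc (m - max u i1)" using True i1m by auto
      have "phi p (Suc m) u (tjnd p (Suc m) m x) = (phi p (Suc m) (min u i1) a ^ (p ^ (m - max u i1))) ^ p"
        using L phx[OF True] e1 by simp
      also have "\<dots> = phi p (Suc m) (min u i1) a ^ (p ^ (m - max u i1) * p)"
        by (rule power_mult[symmetric])
      also have "p ^ (m - max u i1) * p = p ^ (Suc m - max u i1)" unfolding e2 by (rule power_Suc2[symmetric])
      finally show ?thesis using R by simp
    next
      case False
      then have uu: "u = Suc m" using u by simp
      have e1: "min u m = m" "Suc m - max u m = 0" "min m i1 = i1" "m - max m i1 = 0"
        "min u i1 = i1" "Suc m - max u i1 = 0" using uu i1m by auto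
      show ?thesis using L R phx[of m] e1 by simp
    qed
  qed
  show ?thesis using jx eq by simp
qed

end



context cls begin

lemma prodQ:
  assumes a: "a \<in> PP p Q i (Suc m)" and b: "b \<in> elt l" and i1: "i1 \<le> Suc m" and j: "j \<le> l"
    and M: "max i1 j \<le> m"
  shows "rmult p (max i1 j) (tjnd p (max i1 j) i1 (tres p (Suc m) i1 a)) (tjnd p (max i1 j) j (tres p l j b))
     \<in> P ! max i1 j"
proof -
  have "rmult p (max i1 j) (tjnd p (max i1 j) i1 (tres p (Suc m) i1 a)) (tjnd p (max i1 j) j (tres p l j b))
     \<in> PP p Q i (max i1 j)" unfolding PP_mem
  proof (intro conjI allI impI)
    show "rmult p (max i1 j) (tjnd p (max i1 j) i1 (tres p (Suc m) i1 a)) (tjnd p (max i1 j) j (tres p l j b)) \<in> elt (max i1 j)"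
      by (rule rmult_elt)
    fix u assume u: "u \<le> min (max i1 j) i"
    have e: "phi p (max i1 j) u (rmult p (max i1 j) (tjnd p (max i1 j) i1 (tres p (Suc m) i1 a)) (tjnd p (max i1 j) j (tres p l j b)))
      = phi p (Suc m) (min u i1) a ^ (p ^ (max i1 j - max u i1)) * phi p l (min u j) b ^ (p ^ (max i1 j - max u j))"
      by (rule prod_ghost[OF p]) (use i1 j u in auto)
    have "min u i1 \<le> min (Suc m) i" using u M by (auto simp: min_def split: if_splits)
    then have "phi p (Suc m) (min u i1) a \<in> Q" using a by (simp add: PP_def)
    then have "phi p (Suc m) (min u i1) a ^ (p ^ (max i1 j - max u i1)) \<in> Q" by (rule zi_pow[OF QI _ pow_pos])
    then show "phi p (max i1 j) u (rmult p (max i1 j) (tjnd p (max i1 j) i1 (tres p (Suc m) i1 a)) (tjnd p (max i1 j) j (tres p l j b))) \<in> Q"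
      unfolding e by (rule zi_multr[OF QI])
  qed
  then show ?thesis using Pt[OF M] by simp
qed

lemma RP:
  assumes a: "a \<in> PP p Q i (Suc m)" and b: "b \<in> PP p Q i (Suc m)" and ab: "rmult p (Suc m) a b \<in> P ! Suc m"
  shows "a \<in> P ! Suc m \<or> b \<in> P ! Suc m"
proof (rule TP)
  show ae: "a \<in> elt (Suc m)" and be: "b \<in> elt (Suc m)" using a b by (simp_all add: PP_def)
  show "Suc m \<le> Suc m" "Suc m \<le> Suc m" by simp_all
  fix i1 j assume i1: "i1 \<le> Suc m" and j: "j \<le> Suc m"
  show "rmult p (max i1 j) (tjnd p (max i1 j) i1 (tres p (Suc m) i1 a)) (tjnd p (max i1 j) j (tres p (Suc m) j b))
     \<in> P ! max i1 j"
  proof (cases "max i1 j \<le> m")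
    case True then show ?thesis using prodQ[OF a be i1 j] by simp
  next
    case False
    have ja: "tjnd p (Suc m) (Suc m) (tres p (Suc m) (Suc m) a) = a" by (rule jr_id[OF p ae])
    have jb: "tjnd p (Suc m) (Suc m) (tres p (Suc m) (Suc m) b) = b" by (rule jr_id[OF p be])
    have M: "max i1 j = Suc m" using False i1 j by (auto simp: max_def)
    show ?thesis
    proof (cases "i1 = Suc m")
      case ii: True
      show ?thesis
      proof (cases "j = Suc m")
        case True then show ?thesis using ii ja jb ab by simp
      next
        case False
        then have "tjnd p (Suc m) j (tres p (Suc m) j b) \<in> P ! Suc m" using S2[OF b] j by simp
        then show ?thesis using ii M ja rid_mult[OF RI _ ae] by simp
      qed
    next
      case False
      then have jj: "j = Suc m" using M by (simp add: max_def split: if_splits)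
      have "tjnd p (Suc m) i1 (tres p (Suc m) i1 a) \<in> P ! Suc m" using S2[OF a] i1 False by simp
      then show ?thesis using jj jb M rid_mult2[OF pp RI _ be] by simp
    qed
  qed
qed

lemma S5:
  assumes a: "a \<in> PP p Q i (Suc m)"
  shows "rmult p (Suc m) a (etop 1 m) \<in> P ! Suc m"
proof -
  have ae: "a \<in> elt (Suc m)" using a by (simp add: PP_def)
  have eq: "rmult p (Suc m) a (etop 1 m) = tres p (Suc m) m a"
  proof (rule gh_eq[OF pp])
    show "rmult p (Suc m) a (etop 1 m) \<in> elt (Suc m)" by (rule rmult_elt)
    show "tres p (Suc m) m a \<in> elt (Suc m)" using tres_elt elt_mono by (metis le_SucI le_refl)
    fix u assume u: "u \<le> Suc m"
    show "phi p (Suc m) u (rmult p (Suc m) a (etop 1 m)) = phi p (Suc m) u (tres p (Suc m) m a)"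
    proof (cases "u \<le> m")
      case True
      have "phi p (Suc m) u (tres p (Suc m) m a) = int p * phi p m u (tres p (Suc m) m a)"
        using True by (simp add: phi_ind tres_elt)
      also have "\<dots> = int p * phi p (Suc m) u a" using True by (simp add: phi_tres)
      finally show ?thesis using True by (simp add: phi_rmult phi_etop_Suc)
    next
      case False
      then have uu: "u = Suc m" using u by simp
      have "tres p (Suc m) m a (Suc m) = 0" using tres_elt[of p "Suc m" m a] by (simp add: elt_def)
      moreover have "phi p (Suc m) (Suc m) (etop 1 m) = 0" by (simp only: phi_top) (simp add: etop_def)
      ultimately show ?thesis using uu by (simp only: phi_rmult) (simp add: phi_top)
    qed
  qed
  have "tres p (Suc m) m a \<in> PP p Q i m" by (rule PP_res[OF a])
  then show ?thesis using eq Tind by simp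
qed

lemma W:
  assumes pQ: "int p \<notin> Q" and w: "w \<in> PP p Q i (Suc m)" and w0: "w (Suc m) = 0"
  shows "w \<in> P ! Suc m"
proof -
  have we: "w \<in> elt (Suc m)" using w by (simp add: PP_def)
  have wm: "w \<in> elt m" unfolding elt_def
  proof (intro CollectI allI impI)
    fix j assume "m < j" then show "w j = 0" using we w0 by (cases "j = Suc m") (auto simp: elt_def)
  qed
  have "w \<in> PP p Q i m" unfolding PP_mem
  proof (intro conjI allI impI)
    show "w \<in> elt m" by (rule wm)
    fix t assume t: "t \<le> min m i"
    then have "phi p (Suc m) t w \<in> Q" using w by (simp add: PP_def)
    then have "int p * phi p m t w \<in> Q" using t wm by (simp add: phi_ind)
    then show "phi p m t w \<in> Q" using zp_mult[OF Q] pQ by blast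
  qed
  then show ?thesis by (rule Tind)
qed

lemma C:
  assumes pQ: "int p \<notin> Q" and a: "a \<in> PP p Q i (Suc m)" and c: "c \<notin> Q"
    and ca: "(\<lambda>j. c * a j) \<in> P ! Suc m"
  shows "a \<in> P ! Suc m"
proof -
  have ae: "a \<in> elt (Suc m)" using a by (simp add: PP_def)
  have nb: "etop c 0 \<notin> P ! 0" using Pt[of 0] c by (simp add: PP_def phi_etop)
  have "a \<in> P ! Suc m \<or> etop c 0 \<in> P ! 0"
  proof (rule TP)
    show "Suc m \<le> Suc m" "0 \<le> Suc m" "a \<in> elt (Suc m)" "etop c 0 \<in> elt 0" using ae etop_elt by auto
    fix i1 j :: nat assume i1: "i1 \<le> Suc m" and j: "j \<le> 0"
    then have j0: "j = 0" by simp
    show "rmult p (max i1 j) (tjnd p (max i1 j) i1 (tres p (Suc m) i1 a)) (tjnd p (max i1 j) j (tres p 0 j (etop c 0)))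
       \<in> P ! max i1 j"
    proof (cases "max i1 j \<le> m")
      case True then show ?thesis using prodQ[OF a etop_elt i1 j] by simp
    next
      case False
      then have ii: "i1 = Suc m" "max i1 j = Suc m" using i1 j0 by auto
      define B where "B = tjnd p (Suc m) 0 (tres p 0 0 (etop c 0))"
      have ja: "tjnd p (Suc m) (Suc m) (tres p (Suc m) (Suc m) a) = a" by (rule jr_id[OF p ae])
      have phB: "\<And>u. u \<le> Suc m \<Longrightarrow> phi p (Suc m) u B = phi p 0 0 (etop c 0) ^ (p ^ (Suc m - max u 0))"
        unfolding B_def by (subst gN[OF p]) auto
      have phBt: "phi p (Suc m) (Suc m) B = c"
        using phB[of "Suc m"] by (simp add: phi_etop)
      define d where "d = (\<lambda>j. rmult p (Suc m) a B j - c * a j)"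
      have dP: "d \<in> PP p Q i (Suc m)" unfolding PP_mem
      proof (intro conjI allI impI)
        show "d \<in> elt (Suc m)" using ae rmult_elt[of p "Suc m" a B] by (simp add: d_def elt_def)
        fix t assume t: "t \<le> min (Suc m) i"
        then have at: "phi p (Suc m) t a \<in> Q" using a by (simp add: PP_def)
        have "phi p (Suc m) t d = phi p (Suc m) t a * phi p (Suc m) t B - c * phi p (Suc m) t a"
          by (simp add: d_def phi_diff phi_rmult phi_smult)
        then show "phi p (Suc m) t d \<in> Q" using at QI by (simp add: zi_diff zi_multr zi_multl)
      qed
      have "d (Suc m) = phi p (Suc m) (Suc m) d" by (simp add: phi_top)
      also have "\<dots> = 0" using phBt by (simp add: d_def phi_diff phi_rmult phi_smult)
      finally have "d \<in> P ! Suc m" using W[OF pQ dP] by simp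
      then have "(\<lambda>j. d j + c * a j) \<in> P ! Suc m" using rid_add[OF RI _ ca] by simp
      moreover have "(\<lambda>j. d j + c * a j) = rmult p (Suc m) a B" by (simp add: d_def)
      ultimately show ?thesis using ii ja j0 by (simp add: B_def)
    qed
  qed
  then show ?thesis using nb by simp
qed

end



lemma PP_mono: "i \<le> i' \<Longrightarrow> PP p Q i' k \<subseteq> PP p Q i k"
  by (auto simp: PP_def)

context cls begin

lemma case_pQ:
  assumes pQ: "int p \<in> Q"
  shows "P ! Suc m = PP p Q i (Suc m)"
proof
  show "P ! Suc m \<subseteq> PP p Q i (Suc m)" by (rule S1)
  show "PP p Q i (Suc m) \<subseteq> P ! Suc m"
  proof
    fix a assume a: "a \<in> PP p Q i (Suc m)"
    have ae: "a \<in> elt (Suc m)" using a by (simp add: PP_def)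
    show "a \<in> P ! Suc m"
    proof (cases "etop 1 m \<in> P ! Suc m")
      case False
      have "etop 1 m \<in> PP p Q i (Suc m)" unfolding PP_mem
      proof (intro conjI allI impI)
        show "etop 1 m \<in> elt (Suc m)" using etop_elt elt_mono by (metis le_SucI le_refl)
        fix t assume "t \<le> min (Suc m) i"
        then have "t \<le> m" using im by simp
        then show "phi p (Suc m) t (etop 1 m) \<in> Q" using pQ by (simp add: phi_etop_Suc)
      qed
      then show ?thesis using RP[OF a _ S5[OF a]] False by blast
    next
      case True
      define c where "c = a (Suc m)"
      have "phi p (Suc m) 0 a \<in> Q" using a by (simp add: PP_def)
      moreover have "phi p (Suc m) 0 a = c + int p * phi p m 0 a" by (simp add: phi_Suc c_def)
      ultimately have cQ: "c \<in> Q"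
        using zi_diff[OF QI _ zi_multr[OF QI pQ], of "phi p (Suc m) 0 a" "phi p m 0 a"] by simp
      define x where "x = etop c m"
      have xP: "x \<in> PP p Q i m" using cQ by (simp add: PP_def x_def etop_elt phi_etop)
      define J where "J = tjnd p (Suc m) m x"
      have JP: "J \<in> P ! Suc m" unfolding J_def by (rule Tjnd[OF xP])
      have Jt: "J (Suc m) = c" by (simp add: J_def tjnd_def x_def etop_def)
      have Je: "J \<in> elt (Suc m)" unfolding J_def by (simp add: tjnd_elt)
      define r where "r = (\<lambda>j. a j - J j)"
      define r2 where "r2 = (\<lambda>j. if j = m then 0 else r j)"
      have r2e: "r2 \<in> elt m" unfolding elt_def
      proof (intro CollectI allI impI)
        fix j assume j: "m < j"
        show "r2 j = 0"
        proof (cases "j = Suc m")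
          case True then show ?thesis using Jt by (simp add: r2_def r_def c_def)
        next
          case False then show ?thesis using j ae Je by (simp add: r2_def r_def elt_def)
        qed
      qed
      have "r2 \<in> PP p Q i m" unfolding PP_mem
      proof (intro conjI allI impI)
        show "r2 \<in> elt m" by (rule r2e)
        fix t
        have "int p dvd phi p m t r2" by (rule phi_dvd_p) (simp add: r2_def)
        then obtain w where "phi p m t r2 = int p * w" by (auto elim: dvdE)
        then show "phi p m t r2 \<in> Q" using zi_multr[OF QI pQ] by simp
      qed
      then have r2P: "r2 \<in> P ! Suc m" by (rule Tind)
      have r3P: "(\<lambda>j. r m * etop 1 m j) \<in> P ! Suc m" by (rule rid_smult[OF pp RI True])
      have "(\<lambda>j. (r2 j + r m * etop 1 m j) + J j) \<in> P ! Suc m"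
        by (rule rid_add[OF RI rid_add[OF RI r2P r3P] JP])
      moreover have "(\<lambda>j. (r2 j + r m * etop 1 m j) + J j) = a"
        by (rule ext) (simp add: r2_def r_def etop_def)
      ultimately show ?thesis by simp
    qed
  qed
qed

lemma zL: "zelt p (Suc m) \<in> PP p Q i (Suc m)"
  using zelt_in[of "Suc m" Q p] QI PP_mono[OF im, of p Q "Suc m"] by auto

lemma phi_z: "t \<le> Suc m \<Longrightarrow> phi p (Suc m) t (zelt p (Suc m)) = (if t = Suc m then int p else 0)"
  by (rule phi_zelt) auto

lemma case_npQ_in:
  assumes pQ: "int p \<notin> Q" and zin: "zelt p (Suc m) \<in> P ! Suc m"
  shows "P ! Suc m = PP p Q i (Suc m)"
proof
  show "P ! Suc m \<subseteq> PP p Q i (Suc m)" by (rule S1)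
  show "PP p Q i (Suc m) \<subseteq> P ! Suc m"
  proof
    fix a assume a: "a \<in> PP p Q i (Suc m)"
    have ae: "a \<in> elt (Suc m)" using a by (simp add: PP_def)
    have "(\<lambda>j. rmult p (Suc m) a (etop 1 m) j + rmult p (Suc m) a (zelt p (Suc m)) j) \<in> P ! Suc m"
      by (rule rid_add[OF RI S5[OF a] rid_mult[OF RI zin ae]])
    moreover have "(\<lambda>j. rmult p (Suc m) a (etop 1 m) j + rmult p (Suc m) a (zelt p (Suc m)) j) = (\<lambda>j. int p * a j)"
    proof (rule gh_eq[OF pp])
      show "(\<lambda>j. rmult p (Suc m) a (etop 1 m) j + rmult p (Suc m) a (zelt p (Suc m)) j) \<in> elt (Suc m)"
        using rmult_elt[of p "Suc m" a] by (simp add: elt_def)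
      show "(\<lambda>j. int p * a j) \<in> elt (Suc m)" using ae by (simp add: elt_def)
      fix t assume t: "t \<le> Suc m"
      show "phi p (Suc m) t (\<lambda>j. rmult p (Suc m) a (etop 1 m) j + rmult p (Suc m) a (zelt p (Suc m)) j) = phi p (Suc m) t (\<lambda>j. int p * a j)"
      proof (cases "t = Suc m")
        case True
        have "phi p (Suc m) (Suc m) (etop 1 m) = 0" by (simp only: phi_top) (simp add: etop_def)
        then show ?thesis using True phi_z[of "Suc m"] by (simp add: phi_add phi_rmult phi_smult)
      next
        case False
        then have "t \<le> m" using t by simp
        then show ?thesis using t False by (simp only: phi_add phi_rmult phi_smult phi_z[OF t] phi_etop_Suc) simp
      qed
    qed
    ultimately have "(\<lambda>j. int p * a j) \<in> P ! Suc m" by simp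
    then show "a \<in> P ! Suc m" by (rule C[OF pQ a pQ])
  qed
qed

end



lemma int_pow_p: "prime p \<Longrightarrow> int p * (int p ^ (p - 2) * int p) = int p ^ p"
proof -
  assume "prime p"
  then have "p \<ge> 2" by (rule prime_ge_2_nat)
  then obtain k where "p = Suc (Suc k)" by (metis add_2_eq_Suc le_add_diff_inverse)
  then show ?thesis by (simp add: power_Suc2 mult.commute mult.left_commute)
qed

context cls begin

lemma z_in_lt:
  assumes lt: "i < m"
  shows "zelt p (Suc m) \<in> P ! Suc m"
proof -
  have m1: "1 \<le> m" using lt by simp
  define x where "x = zelt p m"
  have xP: "x \<in> PP p Q i m"
  proof -
    have "i \<le> m - 1" using lt by simp
    then show ?thesis using zelt_in[OF m1 QI, of p] PP_mono[of i "m - 1" p Q m] by (auto simp: x_def)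
  qed
  have xe: "x \<in> elt m" using xP by (simp add: PP_def)
  define J where "J = tjnd p (Suc m) m x"
  have JP: "J \<in> P ! Suc m" unfolding J_def by (rule Tjnd[OF xP])
  define y where "y = (\<lambda>j. int p ^ (p - 2) * x j)"
  have yP: "y \<in> PP p Q i m" unfolding y_def by (rule rid_smult[OF pp PP_rideal[OF QI] xP])
  have ye: "y \<in> elt m" using yP by (simp add: PP_def)
  have yIn: "y \<in> P ! Suc m" by (rule Tind[OF yP])
  have "(\<lambda>j. J j - y j) \<in> P ! Suc m" by (rule rid_diff[OF RI JP yIn])
  moreover have "(\<lambda>j. J j - y j) = zelt p (Suc m)"
  proof (rule gh_eq[OF pp])
    show "(\<lambda>j. J j - y j) \<in> elt (Suc m)" using tjnd_elt[of m "Suc m" p x] ye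
      by (simp add: J_def elt_def)
    show "zelt p (Suc m) \<in> elt (Suc m)" by (rule zelt_elt)
    fix u assume u: "u \<le> Suc m"
    have phJ: "phi p (Suc m) u J = phi p m (min u m) x ^ (p ^ (Suc m - max u m))"
      unfolding J_def by (rule phi_tjnd[OF p]) (use u in auto)
    have phx: "\<And>t. t \<le> m \<Longrightarrow> phi p m t x = (if t = m then int p else 0)"
      unfolding x_def by (rule phi_zelt[OF m1])
    show "phi p (Suc m) u (\<lambda>j. J j - y j) = phi p (Suc m) u (zelt p (Suc m))"
    proof -
      consider "u < m" | "u = m" | "u = Suc m" using u by linarith
      then show ?thesis
      proof cases
        case 1
        have "phi p (Suc m) u J = 0"
          using phJ phx[of u] 1 pow_pos[of "Suc m - m"] by (simp add: min_def max_def)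
        moreover have "phi p (Suc m) u y = 0"
          using 1 phx[of u] phi_ind[OF xe, of u p] by (simp add: y_def phi_smult)
        ultimately show ?thesis using 1 phi_z[OF u] by (simp add: phi_diff)
      next
        case 2
        have "phi p (Suc m) u J = int p ^ p"
          using phJ phx[of m] 2 by simp
        moreover have "phi p (Suc m) u y = int p ^ p"
        proof -
          have "phi p (Suc m) u y = int p ^ (p - 2) * phi p (Suc m) m x" using 2 by (simp add: y_def phi_smult)
          also have "\<dots> = int p ^ (p - 2) * (int p * int p)" using phx[of m] phi_ind[OF xe, of m p] by simp
          also have "\<dots> = int p ^ p" using int_pow_p[OF p] by (simp add: mult_ac)
          finally show ?thesis .
        qed
        ultimately show ?thesis using 2 phi_z[OF u] by (simp add: phi_diff)
      next
        case 3
        have "phi p (Suc m) u J = int p"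
          using phJ phx[of m] 3 by simp
        moreover have "phi p (Suc m) u y = 0"
          using 3 ye by (simp add: phi_top elt_def)
        ultimately show ?thesis using 3 phi_z[OF u] by (simp add: phi_diff)
      qed
    qed
  qed
  ultimately show ?thesis by simp
qed

lemma az: "a \<in> elt (Suc m) \<Longrightarrow> rmult p (Suc m) a (zelt p (Suc m)) = (\<lambda>j. a (Suc m) * zelt p (Suc m) j)"
proof (rule gh_eq[OF pp])
  assume ae: "a \<in> elt (Suc m)"
  show "rmult p (Suc m) a (zelt p (Suc m)) \<in> elt (Suc m)" by (rule rmult_elt)
  show "(\<lambda>j. a (Suc m) * zelt p (Suc m) j) \<in> elt (Suc m)" using zelt_elt[of p "Suc m"] by (simp add: elt_def)
  fix t assume t: "t \<le> Suc m"
  show "phi p (Suc m) t (rmult p (Suc m) a (zelt p (Suc m))) = phi p (Suc m) t (\<lambda>j. a (Suc m) * zelt p (Suc m) j)"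
    using phi_z[OF t] phi_top[of p "Suc m" a] by (simp add: phi_rmult phi_smult)
qed

lemma cz_in:
  assumes eq: "i = m" and c: "c \<in> Q"
  shows "(\<lambda>j. c * zelt p (Suc m) j) \<in> P ! Suc m"
proof -
  define x where "x = etop c m"
  have xP: "x \<in> PP p Q i m" using c eq by (simp add: PP_def x_def etop_elt phi_etop)
  define J where "J = tjnd p (Suc m) m x"
  have JP: "J \<in> P ! Suc m" unfolding J_def by (rule Tjnd[OF xP])
  define y where "y = etop (c ^ p) m"
  have "c ^ p \<in> Q" using zi_pow[OF QI c] pp by simp
  then have yP: "y \<in> PP p Q i m" using eq by (simp add: PP_def y_def etop_elt phi_etop)
  have yIn: "y \<in> P ! Suc m" by (rule Tind[OF yP])
  have "(\<lambda>j. int p * J j - y j) \<in> P ! Suc m"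
    using rid_diff[OF RI rid_smult[OF pp RI JP] yIn] by simp
  moreover have "(\<lambda>j. int p * J j - y j) = (\<lambda>j. c * zelt p (Suc m) j)"
  proof (rule gh_eq[OF pp])
    show "(\<lambda>j. int p * J j - y j) \<in> elt (Suc m)" using tjnd_elt[of m "Suc m" p x]
      by (simp add: J_def elt_def y_def etop_def)
    show "(\<lambda>j. c * zelt p (Suc m) j) \<in> elt (Suc m)" using zelt_elt[of p "Suc m"] by (simp add: elt_def)
    fix u assume u: "u \<le> Suc m"
    have phJ: "phi p (Suc m) u J = phi p m (min u m) x ^ (p ^ (Suc m - max u m))"
      unfolding J_def by (rule phi_tjnd[OF p]) (use u in auto)
    show "phi p (Suc m) u (\<lambda>j. int p * J j - y j) = phi p (Suc m) u (\<lambda>j. c * zelt p (Suc m) j)"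
    proof (cases "u = Suc m")
      case True
      have "phi p (Suc m) u J = c" using phJ True by (simp add: x_def phi_etop)
      moreover have "phi p (Suc m) u y = 0" using True by (simp add: phi_top y_def etop_def)
      ultimately show ?thesis using True phi_z[OF u] by (simp add: phi_diff phi_smult)
    next
      case False
      then have um: "u \<le> m" using u by simp
      have "phi p (Suc m) u J = c ^ p" using phJ um by (simp add: x_def phi_etop)
      moreover have "phi p (Suc m) u y = int p * c ^ p" using um by (simp add: y_def phi_etop_Suc)
      ultimately show ?thesis using False phi_z[OF u] by (simp add: phi_diff phi_smult)
    qed
  qed
  ultimately show ?thesis by simp
qed

lemma case_eq:
  assumes pQ: "int p \<notin> Q" and eq: "i = m" and zout: "zelt p (Suc m) \<notin> P ! Suc m"
  shows "P ! Suc m = PP p Q (Suc m) (Suc m)"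
proof
  show "P ! Suc m \<subseteq> PP p Q (Suc m) (Suc m)"
  proof
    fix a assume a: "a \<in> P ! Suc m"
    have aL: "a \<in> PP p Q i (Suc m)" using S1 a by auto
    have ae: "a \<in> elt (Suc m)" using aL by (simp add: PP_def)
    have "rmult p (Suc m) a (zelt p (Suc m)) \<in> P ! Suc m" by (rule rid_mult2[OF pp RI a zelt_elt])
    then have caz: "(\<lambda>j. a (Suc m) * zelt p (Suc m) j) \<in> P ! Suc m" using az[OF ae] by simp
    have "a (Suc m) \<in> Q"
    proof (rule ccontr)
      assume "a (Suc m) \<notin> Q"
      then have "zelt p (Suc m) \<in> P ! Suc m" by (rule C[OF pQ zL _ caz])
      then show False using zout by simp
    qed
    then show "a \<in> PP p Q (Suc m) (Suc m)" using aL eq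
      by (auto simp: PP_def phi_top le_Suc_eq)
  qed
  show "PP p Q (Suc m) (Suc m) \<subseteq> P ! Suc m"
  proof
    fix a assume a: "a \<in> PP p Q (Suc m) (Suc m)"
    have aL: "a \<in> PP p Q i (Suc m)" using PP_mono[of i "Suc m" p Q "Suc m"] im a by auto
    have ae: "a \<in> elt (Suc m)" using a by (simp add: PP_def)
    have "phi p (Suc m) (Suc m) a \<in> Q" using a by (simp add: PP_def)
    then have "a (Suc m) \<in> Q" by (simp add: phi_top)
    then have "rmult p (Suc m) a (zelt p (Suc m)) \<in> P ! Suc m" using cz_in[OF eq] az[OF ae] by simp
    then show "a \<in> P ! Suc m" using RP[OF aL zL] zout by blast
  qed
qed

lemma main:
  "P ! Suc m = PP p Q i (Suc m) \<or> (i = m \<and> P ! Suc m = PP p Q (Suc m) (Suc m))"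
proof (cases "int p \<in> Q")
  case True then show ?thesis using case_pQ by simp
next
  case False
  show ?thesis
  proof (cases "zelt p (Suc m) \<in> P ! Suc m")
    case True then show ?thesis using case_npQ_in[OF False] by simp
  next
    case zout: False
    then have "\<not> i < m" using z_in_lt by blast
    then have "i = m" using im by simp
    then show ?thesis using case_eq[OF False _ zout] by simp
  qed
qed

end



lemma etop_0_eq: "a \<in> elt 0 \<Longrightarrow> a = etop (a 0) 0"
  by (rule ext) (simp add: etop_def elt_def)

lemma classify_base:
  assumes p: "prime p" and P: "tprime p 0 P"
  shows "\<exists>Q i. zprime Q \<and> i \<le> 0 \<and> P = PL p Q i 0"
proof -
  have pp: "p > 0" using p prime_gt_0_nat by blast
  have len: "length P = 1" using P by (simp add: tprime_def tideal_def)
  define I where "I = P ! 0"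
  have RI: "rideal p 0 I" using P by (simp add: tprime_def tideal_def I_def)
  have Ine: "I \<noteq> elt 0" using P by (simp add: tprime_def I_def)
  have TP: "\<And>a b. a \<in> elt 0 \<Longrightarrow> b \<in> elt 0 \<Longrightarrow> rmult p 0 (tjnd p 0 0 (tres p 0 0 a)) (tjnd p 0 0 (tres p 0 0 b)) \<in> I
      \<Longrightarrow> a \<in> I \<or> b \<in> I"
    using P unfolding tprime_def I_def by fastforce
  define Q where "Q = {c. etop c 0 \<in> I}"
  have mul: "\<And>x y. rmult p 0 (etop x 0) (etop y 0) = etop (x * y) 0"
    using smult_rmult[OF pp etop_elt] by (auto simp: etop_def)
  have zQ: "zideal Q" unfolding zideal_def Q_def
  proof (intro conjI ballI allI)
    have "etop 0 0 = zero_elt" by (rule ext) (simp add: etop_def zero_elt_def)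
    then show "0 \<in> {c. etop c 0 \<in> I}" using RI by (simp add: rideal_def)
  next
    fix x y assume "x \<in> {c. etop c 0 \<in> I}" "y \<in> {c. etop c 0 \<in> I}"
    then have "(\<lambda>j. etop x 0 j + etop y 0 j) \<in> I" using rid_add[OF RI] by simp
    moreover have "(\<lambda>j. etop x 0 j + etop y 0 j) = etop (x + y) 0" by (rule ext) (simp add: etop_def)
    ultimately show "x + y \<in> {c. etop c 0 \<in> I}" by simp
  next
    fix x c assume "x \<in> {c. etop c 0 \<in> I}"
    then have "rmult p 0 (etop c 0) (etop x 0) \<in> I" using rid_mult[OF RI _ etop_elt] by simp
    then show "c * x \<in> {c. etop c 0 \<in> I}" using mul by simp
  qed
  have IQ: "I = PP p Q 0 0"
  proof safe
    fix a assume a: "a \<in> I"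
    have ae: "a \<in> elt 0" by (rule rid_elt[OF RI a])
    then show "a \<in> PP p Q 0 0" using a etop_0_eq[OF ae] by (simp add: PP_def Q_def phi_top)
  next
    fix a assume a: "a \<in> PP p Q 0 0"
    then have ae: "a \<in> elt 0" and "etop (a 0) 0 \<in> I" by (auto simp: PP_def Q_def phi_top)
    then show "a \<in> I" using etop_0_eq[OF ae] by simp
  qed
  have Q1: "1 \<notin> Q"
  proof
    assume "1 \<in> Q"
    then have e1: "etop 1 0 \<in> I" by (simp add: Q_def)
    have "elt 0 \<subseteq> I"
    proof
      fix a assume ae: "a \<in> elt 0"
      have "(\<lambda>j. a 0 * etop 1 0 j) \<in> I" by (rule rid_smult[OF pp RI e1])
      moreover have "(\<lambda>j. a 0 * etop 1 0 j) = a" by (rule ext) (use ae in \<open>simp add: etop_def elt_def\<close>)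
      ultimately show "a \<in> I" by simp
    qed
    moreover have "I \<subseteq> elt 0" using RI by (simp add: rideal_def)
    ultimately show False using Ine by blast
  qed
  have zp: "zprime Q" unfolding zprime_def
  proof (intro conjI allI impI)
    show "zideal Q" by (rule zQ)
    show "1 \<notin> Q" by (rule Q1)
    fix x y assume xy: "x * y \<in> Q"
    have "rmult p 0 (tjnd p 0 0 (tres p 0 0 (etop x 0))) (tjnd p 0 0 (tres p 0 0 (etop y 0))) \<in> I"
      using xy mul by (simp add: jr_id[OF p etop_elt] Q_def)
    then have "etop x 0 \<in> I \<or> etop y 0 \<in> I" using TP etop_elt by blast
    then show "x \<in> Q \<or> y \<in> Q" by (simp add: Q_def)
  qed
  have "P = [I]" using len unfolding I_def by (cases P) auto
  also have "\<dots> = PL p Q 0 0" by (simp add: PL_def IQ)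
  finally show ?thesis using zp by blast
qed

theorem classify:
  assumes p: "prime p"
  shows "tprime p n P \<Longrightarrow> \<exists>Q i. zprime Q \<and> i \<le> n \<and> P = PL p Q i n"
proof (induction n arbitrary: P)
  case 0 then show ?case by (rule classify_base[OF p])
next
  case (Suc m P)
  have len: "length P = Suc (Suc m)" using Suc.prems by (simp add: tprime_def tideal_def)
  obtain Q i where Q: "zprime Q" and im: "i \<le> m" and tk: "take (Suc m) P = PL p Q i m"
    using Suc.IH[OF trunc_prime[OF Suc.prems]] by blast
  have Pt: "\<And>k. k \<le> m \<Longrightarrow> P ! k = PP p Q i k"
  proof -
    fix k assume k: "k \<le> m"
    have "P ! k = take (Suc m) P ! k" using k by simp
    then show "P ! k = PP p Q i k" using tk k by (simp add: PL_nth)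
  qed
  interpret cls p Q i m P using p Q im Suc.prems Pt by unfold_locales auto
  have Peq: "P = PL p Q i m @ [P ! Suc m]"
    using take_Suc_conv_app_nth[of "Suc m" P] len tk by simp
  from main show ?case
  proof
    assume "P ! Suc m = PP p Q i (Suc m)"
    then have "P = PL p Q i (Suc m)" using Peq PL_snoc[of m p Q i i] by simp
    moreover have "i \<le> Suc m" using im by simp
    ultimately show ?thesis using Q by blast
  next
    assume a: "i = m \<and> P ! Suc m = PP p Q (Suc m) (Suc m)"
    then have "P = PL p Q (Suc m) (Suc m)" using Peq PL_snoc[of m p Q i "Suc m"] PP_eq[of _ m "Suc m" p Q] by auto
    then show ?thesis using Q le_refl by blast
  qed
qed




lemma Zmax:
  assumes Q: "zprime Q" and Q0: "Q \<noteq> {0}" and Q': "zprime Q'" and sub: "Q \<subseteq> Q'"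
  shows "Q' \<subseteq> Q"
proof
  have QI: "zideal Q" using Q by (rule zp_zi)
  obtain y where y: "y \<in> Q" "y \<noteq> 0" using Q0 zi_0[OF QI] by blast
  have ex: "\<exists>g::nat. g > 0 \<and> int g \<in> Q"
  proof (cases "y > 0")
    case True then show ?thesis using y by (intro exI[of _ "nat y"]) simp
  next
    case False then have "- y > 0" using y by simp
    then show ?thesis using zi_neg[OF QI y(1)] by (intro exI[of _ "nat (- y)"]) simp
  qed
  define gn where "gn = (LEAST g::nat. g > 0 \<and> int g \<in> Q)"
  have gnQ: "gn > 0 \<and> int gn \<in> Q" unfolding gn_def using ex by (metis (mono_tags, lifting) LeastI)
  define g where "g = int gn"
  have gQ: "g > 0 \<and> g \<in> Q" using gnQ by (simp add: g_def)
  have gmin: "\<And>h. h > 0 \<Longrightarrow> h \<in> Q \<Longrightarrow> g \<le> h"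
  proof -
    fix h :: int assume h: "h > 0" "h \<in> Q"
    then have "gn \<le> nat h" unfolding gn_def by (intro Least_le) simp
    then show "g \<le> h" using h by (simp add: g_def)
  qed
  fix x assume x: "x \<in> Q'"
  show "x \<in> Q"
  proof (rule ccontr)
    assume xQ: "x \<notin> Q"
    define d where "d = gcd x g"
    have dpos: "d > 0" using gQ by (simp add: d_def)
    have dg: "d dvd g" by (simp add: d_def)
    have gd: "g = d * (g div d)" using dg by simp
    have "d \<in> Q \<or> g div d \<in> Q" using zp_mult[OF Q, of d "g div d"] gd gQ by simp
    then have "d = 1"
    proof
      assume "d \<in> Q"
      then have "g \<le> d" using gmin dpos by blast
      moreover have "d \<le> g" using dg gQ by (simp add: zdvd_imp_le)
      ultimately have "d = g" by simp
      moreover have "d dvd x" by (simp add: d_def)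
      ultimately have "g dvd x" by simp
      then obtain k where "x = g * k" by (auto elim: dvdE)
      then have "x \<in> Q" using zi_multl[OF QI, of g k] gQ by (simp add: mult.commute)
      then show "d = 1" using xQ by simp
    next
      assume h: "g div d \<in> Q"
      have "0 < d * (g div d)" using gd gQ by simp
      then have gdpos: "g div d > 0" using dpos by (simp add: zero_less_mult_iff)
      then have "g \<le> g div d" using gmin h by blast
      then have "g * d \<le> g div d * d" using dpos by simp
      then have "g * d \<le> g" using gd by (simp add: mult.commute)
      then have "g * d \<le> g * 1" by simp
      then have "d \<le> 1" using gQ by (simp only: mult_le_cancel_left_pos)
      then show "d = 1" using dpos by simp
    qed
    obtain u v where uv: "u * x + v * g = gcd x g" using bezout_int by blast
    have "u * x + v * g \<in> Q'"
      using zi_add[OF zp_zi[OF Q'] zi_multl[OF zp_zi[OF Q'] x] zi_multl[OF zp_zi[OF Q']]] sub gQ by blast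
    then have "1 \<in> Q'" using uv \<open>d = 1\<close> by (simp add: d_def)
    then show False using zp_1[OF Q'] by simp
  qed
qed

lemma phi_cong0:
  assumes "t \<le> k"
  shows "int p dvd phi p k 0 a - phi p k t a"
  using assms
proof (induction t)
  case 0 then show ?case by simp
next
  case (Suc t)
  have "phi p k t a = int p ^ (k - t) * a t + phi p k (Suc t) a" using Suc by (intro phi_step) simp
  moreover have "int p dvd int p ^ (k - t) * a t"
  proof -
    have "int p dvd int p ^ (k - t)" using Suc by (intro dvd_power) auto
    then show ?thesis by (rule dvd_mult2)
  qed
  moreover have "int p dvd phi p k 0 a - phi p k t a" using Suc by simp
  moreover have "phi p k 0 a - phi p k (Suc t) a = (phi p k 0 a - phi p k t a) + int p ^ (k - t) * a t"
    using \<open>phi p k t a = int p ^ (k - t) * a t + phi p k (Suc t) a\<close> by simp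
  ultimately show ?case by (simp only:) (rule dvd_add)
qed

lemma PP_pQ:
  assumes QI: "zideal Q" and pQ: "int p \<in> Q"
  shows "PP p Q i k = PP p Q 0 k"
proof -
  have key: "\<And>a t. t \<le> k \<Longrightarrow> phi p k t a \<in> Q \<longleftrightarrow> phi p k 0 a \<in> Q"
  proof -
    fix a t assume t: "t \<le> k"
    obtain w where w: "phi p k 0 a - phi p k t a = int p * w" using phi_cong0[OF t, where p=p and a=a] by (auto elim: dvdE)
    have wQ: "int p * w \<in> Q" using zi_multr[OF QI pQ] by simp
    show "phi p k t a \<in> Q \<longleftrightarrow> phi p k 0 a \<in> Q"
    proof
      assume "phi p k t a \<in> Q"
      then have "phi p k t a + int p * w \<in> Q" using zi_add[OF QI _ wQ] by simp
      then show "phi p k 0 a \<in> Q" using w by (simp add: algebra_simps)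
    next
      assume "phi p k 0 a \<in> Q"
      then have "phi p k 0 a - int p * w \<in> Q" using zi_diff[OF QI _ wQ] by simp
      then show "phi p k t a \<in> Q" using w by (simp add: algebra_simps)
    qed
  qed
  have "\<And>a. (\<forall>t \<le> min k i. phi p k t a \<in> Q) \<longleftrightarrow> (\<forall>t \<le> min k 0. phi p k t a \<in> Q)"
  proof -
    fix a
    have "(\<forall>t \<le> min k i. phi p k t a \<in> Q) \<longleftrightarrow> phi p k 0 a \<in> Q"
    proof
      assume "\<forall>t \<le> min k i. phi p k t a \<in> Q" then show "phi p k 0 a \<in> Q" by simp
    next
      assume h: "phi p k 0 a \<in> Q"
      show "\<forall>t \<le> min k i. phi p k t a \<in> Q"
      proof (intro allI impI)
        fix t assume "t \<le> min k i" then have "t \<le> k" by simp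
        then show "phi p k t a \<in> Q" using key[of t a] h by blast
      qed
    qed
    also have "\<dots> \<longleftrightarrow> (\<forall>t \<le> min k 0. phi p k t a \<in> Q)" by simp
    finally show "(\<forall>t \<le> min k i. phi p k t a \<in> Q) \<longleftrightarrow> (\<forall>t \<le> min k 0. phi p k t a \<in> Q)" .
  qed
  then show ?thesis unfolding PP_def by blast
qed

lemma PL_eqI: "(\<And>k. k \<le> n \<Longrightarrow> PP p Q i k = PP p Q' i' k) \<Longrightarrow> PL p Q i n = PL p Q' i' n"
  unfolding PL_def by (auto simp: less_Suc_eq_le)

definition fval :: "nat \<Rightarrow> nat \<Rightarrow> int set \<Rightarrow> nat \<Rightarrow> nat" where
  "fval p n Q i = (if Q = {0} then 0 else 1) + (if int p \<in> Q then n else n - i)"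

lemma fval_le: "fval p n Q i \<le> n + 1" unfolding fval_def by auto

lemma cmp:
  assumes p: "prime p" and Q: "zprime Q" and Q': "zprime Q'" and i: "i \<le> n" and i': "i' \<le> n"
    and sub: "tpsubset (PL p Q i n) (PL p Q' i' n)"
  shows "fval p n Q i < fval p n Q' i'"
proof -
  have pp: "p > 0" using p prime_gt_0_nat by blast
  have ne: "PL p Q i n \<noteq> PL p Q' i' n" using sub by (simp add: tpsubset_def)
  have comp: "\<And>k. k \<le> n \<Longrightarrow> PP p Q i k \<subseteq> PP p Q' i' k"
    using sub by (auto simp: tpsubset_def tsubset_def PL_nth less_Suc_eq_le)
  have QQ: "Q \<subseteq> Q'"
  proof
    fix c assume "c \<in> Q"
    then have "etop c 0 \<in> PP p Q i 0" by (simp add: PP_def etop_elt phi_etop)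
    then have "etop c 0 \<in> PP p Q' i' 0" using comp by blast
    then show "c \<in> Q'" by (simp add: PP_def phi_etop)
  qed
  have ilt: "int p \<notin> Q' \<Longrightarrow> Q = Q' \<or> Q = {0} \<Longrightarrow> i' \<le> i"
  proof (rule ccontr)
    assume pQ': "int p \<notin> Q'" and QQ': "Q = Q' \<or> Q = {0}" and "\<not> i' \<le> i"
    then have lt: "i < i'" by simp
    then have i1: "1 \<le> i'" by simp
    have "zelt p i' \<in> PP p Q (i' - 1) i'" by (rule zelt_in[OF i1 zp_zi[OF Q]])
    moreover have "PP p Q (i' - 1) i' \<subseteq> PP p Q i i'" by (rule PP_mono) (use lt in simp)
    ultimately have "zelt p i' \<in> PP p Q' i' i'" using comp[OF i'] by blast
    moreover have "zelt p i' \<notin> PP p Q' i' i'" by (rule zelt_notin[OF i1 le_refl pQ'])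
    ultimately show False by simp
  qed
  show ?thesis
  proof (cases "Q = {0}")
    case True
    have p0: "int p \<notin> Q" using True pp by simp
    show ?thesis
    proof (cases "Q' = {0}")
      case Q'0: True
      have "i' \<le> i" using ilt Q'0 pp True by simp
      moreover have "i' \<noteq> i" using ne True Q'0 by auto
      ultimately show ?thesis using True Q'0 pp i by (simp add: fval_def)
    next
      case False
      show ?thesis
      proof (cases "int p \<in> Q'")
        case True then show ?thesis using \<open>Q = {0}\<close> False p0 by (simp add: fval_def)
      next
        case pQ': False
        then have "i' \<le> i" using ilt \<open>Q = {0}\<close> by simp
        then show ?thesis using \<open>Q = {0}\<close> False p0 pQ' i i' by (simp add: fval_def)
      qed
    qed
  next
    case False
    have QE: "Q' = Q" using Zmax[OF Q False Q' QQ] QQ by simp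
    show ?thesis
    proof (cases "int p \<in> Q")
      case True
      have "PL p Q i n = PL p Q' i' n"
      proof (intro PL_eqI)
        fix k
        show "PP p Q i k = PP p Q' i' k"
          using QE PP_pQ[OF zp_zi[OF Q] True, of i k] PP_pQ[OF zp_zi[OF Q] True, of i' k] by simp
      qed
      then show ?thesis using ne by simp
    next
      case pQ: False
      have "i' \<le> i" using ilt QE pQ by simp
      moreover have "i' \<noteq> i" using ne QE by auto
      ultimately show ?thesis using False QE pQ i by (simp add: fval_def)
    qed
  qed
qed




lemma chain_bound:
  assumes p: "prime p" and C: "prime_chain p r C len"
  shows "len \<le> r + 1"
proof -
  have "\<forall>j. \<exists>x. j \<le> len \<longrightarrow> zprime (fst x) \<and> snd x \<le> r \<and> C j = PL p (fst x) (snd x) r"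
  proof
    fix j
    show "\<exists>x. j \<le> len \<longrightarrow> zprime (fst x) \<and> snd x \<le> r \<and> C j = PL p (fst x) (snd x) r"
    proof (cases "j \<le> len")
      case True
      then have "tprime p r (C j)" using C by (simp add: prime_chain_def)
      then obtain Q i where "zprime Q" "i \<le> r" "C j = PL p Q i r" using classify[OF p] by blast
      then show ?thesis by (intro exI[of _ "(Q, i)"]) simp
    qed simp
  qed
  then obtain h where h: "\<And>j. j \<le> len \<Longrightarrow> zprime (fst (h j)) \<and> snd (h j) \<le> r \<and> C j = PL p (fst (h j)) (snd (h j)) r"
    by (metis choice)
  define F where "F j = fval p r (fst (h j)) (snd (h j))" for j
  have mono: "\<And>j. j < len \<Longrightarrow> F j < F (Suc j)"
  proof -
    fix j assume j: "j < len"
    have "tpsubset (C j) (C (Suc j))" using C j by (simp add: prime_chain_def)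
    then have "tpsubset (PL p (fst (h j)) (snd (h j)) r) (PL p (fst (h (Suc j))) (snd (h (Suc j))) r)"
      using h[of j] h[of "Suc j"] j by simp
    then show "F j < F (Suc j)" unfolding F_def
      using cmp[OF p] h[of j] h[of "Suc j"] j by simp
  qed
  have "\<And>j. j \<le> len \<Longrightarrow> j \<le> F j"
  proof -
    fix j show "j \<le> len \<Longrightarrow> j \<le> F j"
    proof (induction j)
      case 0 then show ?case by simp
    next
      case (Suc j)
      then have "j \<le> F j" by simp
      moreover have "F j < F (Suc j)" using mono Suc by simp
      ultimately show ?case by simp
    qed
  qed
  then have "len \<le> F len" by simp
  also have "F len \<le> r + 1" unfolding F_def by (rule fval_le)
  finally show ?thesis .
qed

lemma prime3: "prime (3::nat)" by simp
lemma prime2: "prime (2::nat)" by simp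

theorem corollary6:
  fixes p r :: nat
  assumes "prime p"
  shows "tdim p r = enat (r + 1)
    \<and> (\<forall>q::nat. prime q \<and> q \<noteq> p \<longrightarrow> prime_chain p r (std_chain p r q) (r + 1))"
proof
  show ch: "\<forall>q::nat. prime q \<and> q \<noteq> p \<longrightarrow> prime_chain p r (std_chain p r q) (r + 1)"
    using std_chain_ok[OF assms] by blast
  define q :: nat where "q = (if p = 2 then 3 else 2)"
  have q: "prime q" "q \<noteq> p" by (auto simp: q_def prime3 prime2)
  have mem: "enat (r + 1) \<in> {enat len | len. \<exists>C. prime_chain p r C len}"
    using ch q by blast
  have ub: "\<And>x. x \<in> {enat len | len. \<exists>C. prime_chain p r C len} \<Longrightarrow> x \<le> enat (r + 1)"
    using chain_bound[OF assms] by auto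
  show "tdim p r = enat (r + 1)" unfolding tdim_def
  proof (rule antisym)
    show "Sup {enat len | len. \<exists>C. prime_chain p r C len} \<le> enat (r + 1)" by (rule Sup_least) (rule ub)
    show "enat (r + 1) \<le> Sup {enat len | len. \<exists>C. prime_chain p r C len}" by (rule Sup_upper[OF mem])
  qed
qed


end
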